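(* Let the control policy be $\mu^*$ given by $u_k^*=-K_k\hat x_k$. Define the queuing policy $\pi'$ by $$\eta_k^+=\operatorname*{arg\,min}_{\eta_k\in\{0,\dots,\eta_{k-1}+1\}}\Big\{-\theta_k\eta_k+\Big(\sum_{t=1}^{\eta_k}A^{t-1}w_{k-t}\Big)^T\Gamma_k\Big(\sum_{t=1}^{\eta_k}A^{t-1}w_{k-t}\Big)\Big\},$$ where $\Gamma_k=K_k^T(B^TS_{k+1}B+R_k)K_k$, and let $\pi''$ be the zero-wait queuing policy $\eta_k=0$ for all $k$. Then $\chi(\pi',\mu^* )\le\chi(\pi'',\mu^* )$.
   Context: Let $A\in\mathbb{R}^{n\times n}$, $B\in\mathbb{R}^{n\times m}$ with $(A,B)$ controllable. The plant evolves as $x_{k+1}=Ax_k+Bu_k+w_k$, $k=0,\dots,N$, where $x_0$ is Gaussian with mean $m_0$ and covariance $M_0$, the $w_k\in\mathbb{R}^n$ are independent zero-mean Gaussian vectors with covariance $W_k\succ0$, independent of $x_0$. The age of information is an integer sequence $\eta_0=0$, $\eta_k\in\{0,1,\dots,\eta_{k-1}+1\}$; at time $k$ the latest measurement at the controller is $x_{k-\eta_k}$, and the controller estimate is $\hat x_k=A^{\eta_k}x_{k-\eta_k}+\sum_{t=1}^{\eta_k}A^{t-1}Bu_{k-t}$. Queuing information set: $\mathcal{I}^q_k=\{w_t: t\le k-1\}$; a queuing policy $\pi=\{\eta_0,\dots,\eta_N\}$ is admissible if $\eta_k$ is $\mathcal{I}^q_k$-measurable. Weights: $Q_k\succeq0$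 ($k=0,\dots,N+1$), $R_k\succ0$, real $\theta_k$. Cost: $$\chi(\pi,\mu)=\mathbb{E}\Big[x_{N+1}^TQ_{N+1}x_{N+1}+\sum_{k=0}^N\big(-\theta_k\eta_k+x_k^TQ_kx_k+u_k^TR_ku_k\big)\Big].$$ Riccati recursion: $S_{N+1}=Q_{N+1}$, $K_k=(R_k+B^TS_{k+1}B)^{-1}B^TS_{k+1}A$, $S_k=Q_k+A^TS_{k+1}A-K_k^T(R_k+B^TS_{k+1}B)K_k$ for $k=N,\dots,0$. *)

theory Defs
  imports "HOL-Probability.Probability"
begin

type_synonym ('r,'c) mat = "real ^ 'c ^ 'r"

(* matrix power A^k *)
primrec mpow :: "real^'n^'n \<Rightarrow> nat \<Rightarrow> real^'n^'n" where
  "mpow A 0 = mat 1"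
| "mpow A (Suc k) = A ** mpow A k"

(* (A,B) controllable: Kalman rank condition, i.e. the columns of
   [B, AB, ..., A^(n-1)B] span R^n *)
definition controllable :: "real^'n^'n \<Rightarrow> real^'m^'n \<Rightarrow> bool" where
  "controllable A B \<longleftrightarrow>
     span {mpow A i *v (B *v u) | i u. i < CARD('n)} = (UNIV :: (real^'n) set)"

definition psd :: "real^'n^'n \<Rightarrow> bool" where
  "psd P \<longleftrightarrow> transpose P = P \<and> (\<forall>v. 0 \<le> v \<bullet> (P *v v))"

definition pd :: "real^'n^'n \<Rightarrow> bool" where
  "pd P \<longleftrightarrow> transpose P = P \<and> (\<forall>v. v \<noteq> 0 \<longrightarrow> 0 < v \<bullet> (P *v v))"

(* X is a Gaussian random vector with mean m and covariance C
   (characteristic-function definition, allows singular C) *)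
definition gaussian_vec :: "'a measure \<Rightarrow> ('a \<Rightarrow> real^'n) \<Rightarrow> real^'n \<Rightarrow> real^'n^'n \<Rightarrow> bool" where
  "gaussian_vec M X m C \<longleftrightarrow> X \<in> borel_measurable M \<and> transpose C = C \<and>
     (\<forall>t. prob_space.expectation M (\<lambda>\<omega>. exp (\<i> * complex_of_real (t \<bullet> X \<omega>)))
          = exp (\<i> * complex_of_real (t \<bullet> m) - complex_of_real ((t \<bullet> (C *v t)) / 2)))"

(* Riccati recursion: S_{N+1} = Q_{N+1},
   S_k = Q_k + A^T S_{k+1} A - K_k^T (R_k + B^T S_{k+1} B) K_k *)
function riccS :: "real^'n^'n \<Rightarrow> real^'m^'n \<Rightarrow> (nat \<Rightarrow> real^'n^'n) \<Rightarrow> (nat \<Rightarrow> real^'m^'m)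
                   \<Rightarrow> nat \<Rightarrow> nat \<Rightarrow> real^'n^'n" where
  "riccS A B Q R N k =
     (if N < k then Q (N+1)
      else (let S' = riccS A B Q R N (Suc k);
                G = R k + transpose B ** S' ** B;
                K = matrix_inv G ** transpose B ** S' ** A
            in Q k + transpose A ** S' ** A - transpose K ** G ** K))"
  by pat_completeness auto
termination by (relation "Wellfounded.measure (\<lambda>(A,B,Q,R,N,k). Suc N - k)") auto

definition riccK :: "real^'n^'n \<Rightarrow> real^'m^'n \<Rightarrow> (nat \<Rightarrow> real^'n^'n) \<Rightarrow> (nat \<Rightarrow> real^'m^'m)
                   \<Rightarrow> nat \<Rightarrow> nat \<Rightarrow> real^'n^'m" where
  "riccK A B Q R N k =
     matrix_inv (R k + transpose B ** riccS A B Q R N (Suc k) ** B)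
       ** transpose B ** riccS A B Q R N (Suc k) ** A"

(* Gamma_k = K_k^T (B^T S_{k+1} B + R_k) K_k *)
definition riccGamma :: "real^'n^'n \<Rightarrow> real^'m^'n \<Rightarrow> (nat \<Rightarrow> real^'n^'n) \<Rightarrow> (nat \<Rightarrow> real^'m^'m)
                   \<Rightarrow> nat \<Rightarrow> nat \<Rightarrow> real^'n^'n" where
  "riccGamma A B Q R N k =
     transpose (riccK A B Q R N k)
       ** (transpose B ** riccS A B Q R N (Suc k) ** B + R k) ** riccK A B Q R N k"

(* Closed-loop trajectory for one realisation: given the initial state x0,
   disturbances w, age-of-information sequence eta and gains K, with
   u_k = - K_k xhat_k,
   xhat_k = A^{eta_k} x_{k-eta_k} + sum_{t=1}^{eta_k} A^{t-1} B u_{k-t},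
   x_{k+1} = A x_k + B u_k + w_k.
   traj ... k = ([x_0,...,x_k], [u_0,...,u_{k-1}]). *)
definition xhat :: "real^'n^'n \<Rightarrow> real^'m^'n \<Rightarrow> nat \<Rightarrow> nat
                    \<Rightarrow> (real^'n) list \<Rightarrow> (real^'m) list \<Rightarrow> real^'n" where
  "xhat A B e k xs us = mpow A e *v (xs ! (k - e))
      + (\<Sum>t = 1..e. mpow A (t - 1) *v (B *v (us ! (k - t))))"

fun traj :: "real^'n^'n \<Rightarrow> real^'m^'n \<Rightarrow> (nat \<Rightarrow> real^'n^'m) \<Rightarrow> (nat \<Rightarrow> nat)
             \<Rightarrow> real^'n \<Rightarrow> (nat \<Rightarrow> real^'n) \<Rightarrow> nat \<Rightarrow> (real^'n) list \<times> (real^'m) list" where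
  "traj A B K eta x0 w 0 = ([x0], [])"
| "traj A B K eta x0 w (Suc k) =
     (let (xs, us) = traj A B K eta x0 w k;
          uk = - (K k *v xhat A B (eta k) k xs us)
      in (xs @ [A *v (xs ! k) + B *v uk + w k], us @ [uk]))"

definition state :: "real^'n^'n \<Rightarrow> real^'m^'n \<Rightarrow> (nat \<Rightarrow> real^'n^'m) \<Rightarrow> (nat \<Rightarrow> nat)
             \<Rightarrow> real^'n \<Rightarrow> (nat \<Rightarrow> real^'n) \<Rightarrow> nat \<Rightarrow> real^'n" where
  "state A B K eta x0 w k = fst (traj A B K eta x0 w k) ! k"

definition input :: "real^'n^'n \<Rightarrow> real^'m^'n \<Rightarrow> (nat \<Rightarrow> real^'n^'m) \<Rightarrow> (nat \<Rightarrow> nat)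
             \<Rightarrow> real^'n \<Rightarrow> (nat \<Rightarrow> real^'n) \<Rightarrow> nat \<Rightarrow> real^'m" where
  "input A B K eta x0 w k = snd (traj A B K eta x0 w (Suc k)) ! k"

(* pathwise realised cost
   x_{N+1}^T Q_{N+1} x_{N+1} + sum_{k=0}^N (-theta_k eta_k + x_k^T Q_k x_k + u_k^T R_k u_k) *)
definition path_cost :: "real^'n^'n \<Rightarrow> real^'m^'n \<Rightarrow> (nat \<Rightarrow> real^'n^'m)
     \<Rightarrow> (nat \<Rightarrow> real^'n^'n) \<Rightarrow> (nat \<Rightarrow> real^'m^'m) \<Rightarrow> (nat \<Rightarrow> real) \<Rightarrow> nat
     \<Rightarrow> (nat \<Rightarrow> nat) \<Rightarrow> real^'n \<Rightarrow> (nat \<Rightarrow> real^'n) \<Rightarrow> real" where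
  "path_cost A B K Q R \<theta> N eta x0 w =
     (let x = state A B K eta x0 w; u = input A B K eta x0 w in
      x (N+1) \<bullet> (Q (N+1) *v x (N+1))
      + (\<Sum>k = 0..N. - \<theta> k * real (eta k) + x k \<bullet> (Q k *v x k) + u k \<bullet> (R k *v u k)))"

(* chi(pi, mu^* ) for a (random) queuing policy eta :: nat => 'a => nat,
   with mu^* : u_k = - K_k xhat_k *)
definition chi :: "'a measure \<Rightarrow> real^'n^'n \<Rightarrow> real^'m^'n
     \<Rightarrow> (nat \<Rightarrow> real^'n^'n) \<Rightarrow> (nat \<Rightarrow> real^'m^'m) \<Rightarrow> (nat \<Rightarrow> real) \<Rightarrow> nat
     \<Rightarrow> ('a \<Rightarrow> real^'n) \<Rightarrow> (nat \<Rightarrow> 'a \<Rightarrow> real^'n) \<Rightarrow> (nat \<Rightarrow> 'a \<Rightarrow> nat) \<Rightarrow> real" where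
  "chi M A B Q R \<theta> N x0 w eta =
     prob_space.expectation M (\<lambda>\<omega>. path_cost A B (riccK A B Q R N) Q R \<theta> N
                                   (\<lambda>k. eta k \<omega>) (x0 \<omega>) (\<lambda>k. w k \<omega>))"

(* objective of the argmin defining pi' at time k *)
definition queue_obj :: "real^'n^'n \<Rightarrow> real^'n^'n \<Rightarrow> real \<Rightarrow> nat \<Rightarrow> (nat \<Rightarrow> real^'n) \<Rightarrow> nat \<Rightarrow> real" where
  "queue_obj A \<Gamma> th k w e =
     (let s = (\<Sum>t = 1..e. mpow A (t - 1) *v w (k - t)) in - th * real e + s \<bullet> (\<Gamma> *v s))"

(* pi': eta_0 = 0, eta_k = argmin over {0..eta_{k-1}+1} (ties broken towards the
   smallest age) *)
fun eta_plus :: "real^'n^'n \<Rightarrow> real^'m^'n \<Rightarrow> (nat \<Rightarrow> real^'n^'n) \<Rightarrow> (nat \<Rightarrow> real^'m^'m)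
     \<Rightarrow> (nat \<Rightarrow> real) \<Rightarrow> nat \<Rightarrow> (nat \<Rightarrow> real^'n) \<Rightarrow> nat \<Rightarrow> nat" where
  "eta_plus A B Q R \<theta> N w 0 = 0"
| "eta_plus A B Q R \<theta> N w (Suc k) =
     (let p = eta_plus A B Q R \<theta> N w k;
          f = queue_obj A (riccGamma A B Q R N (Suc k)) (\<theta> (Suc k)) (Suc k) w
      in LEAST e. e \<le> p + 1 \<and> (\<forall>e'\<le>p + 1. f e \<le> f e'))"

end

theory Submission
  imports Defs
begin

(* ---- from s1/P1.thy ---- *)


declare riccS.simps[simp del]

lemma inner_transpose: "(x::real^'n) \<bullet> (A *v y) = (transpose A *v x) \<bullet> y"
  by (metis dot_lmul_matrix transpose_matrix_vector inner_commute transpose_transpose vector_transpose_matrix)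

lemma inner_sym_mat: "transpose A = A \<Longrightarrow> (x::real^'n) \<bullet> (A *v y) = y \<bullet> (A *v x)"
  by (metis inner_transpose inner_commute)

lemma invertible_inv:
  fixes G :: "real^'n^'n"
  assumes "invertible G"
  shows "G ** matrix_inv G = mat 1" "matrix_inv G ** G = mat 1"
proof -
  from assms obtain A' where "G ** A' = mat 1 \<and> A' ** G = mat 1" unfolding invertible_def by blast
  hence "G ** matrix_inv G = mat 1 \<and> matrix_inv G ** G = mat 1"
    unfolding matrix_inv_def by (rule someI)
  thus "G ** matrix_inv G = mat 1" "matrix_inv G ** G = mat 1" by auto
qed

lemma pd_invertible:
  fixes G :: "real^'n^'n"
  assumes "pd G" shows "invertible G"
proof -
  have "\<forall>x. G *v x = 0 \<longrightarrow> x = 0"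
  proof (intro allI impI)
    fix x assume "G *v x = 0"
    hence "x \<bullet> (G *v x) = 0" by simp
    thus "x = 0" using assms unfolding pd_def by force
  qed
  thus ?thesis using matrix_left_invertible_ker invertible_left_inverse by blast
qed

lemma inner_mat_left: "((B::real^'m^'n) *v u) \<bullet> y = u \<bullet> (transpose B *v y)"
  by (metis inner_transpose inner_commute)

lemma quad_mat: "((B::real^'m^'n) *v u) \<bullet> (S *v (C *v v)) = u \<bullet> ((transpose B ** S ** C) *v v)"
  by (simp only: inner_mat_left matrix_vector_mul_assoc matrix_mul_assoc)

lemma transpose_add: "transpose ((A::real^'n^'m) + B) = transpose A + transpose B"
  by (simp add: transpose_def vec_eq_iff)
lemma transpose_diff: "transpose ((A::real^'n^'m) - B) = transpose A - transpose B"
  by (simp add: transpose_def vec_eq_iff)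

(* the key one-step identity *)
lemma step_identity:
  fixes A :: "real^'n^'n" and B :: "real^'m^'n" and Q S' :: "real^'n^'n" and R :: "real^'m^'m"
  defines "G \<equiv> R + transpose B ** S' ** B"
  defines "K \<equiv> matrix_inv G ** transpose B ** S' ** A"
  assumes S'sym: "transpose S' = S'" and Rsym: "transpose R = R" and inv: "invertible G"
  shows "x \<bullet> (Q *v x) + u \<bullet> (R *v u) + (A *v x + B *v u + w) \<bullet> (S' *v (A *v x + B *v u + w))
     - x \<bullet> ((Q + transpose A ** S' ** A - transpose K ** G ** K) *v x)
   = (u + K *v x) \<bullet> (G *v (u + K *v x)) + 2 * (w \<bullet> (S' *v (A *v x + B *v u))) + w \<bullet> (S' *v w)"
proof -
  have Gsym: "transpose G = G"
    unfolding G_def by (simp add: transpose_add matrix_transpose_mul Rsym S'sym matrix_mul_assoc)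
  have GK: "G ** K = transpose B ** S' ** A"
  proof -
    have "G ** K = (G ** matrix_inv G) ** (transpose B ** S' ** A)"
      unfolding K_def by (simp add: matrix_mul_assoc)
    thus ?thesis using invertible_inv(1)[OF inv] by (simp add: matrix_mul_lid)
  qed
  let ?y = "A *v x + B *v u"
  have e1: "(?y + w) \<bullet> (S' *v (?y + w)) = ?y \<bullet> (S' *v ?y) + 2 * (w \<bullet> (S' *v ?y)) + w \<bullet> (S' *v w)"
    using inner_sym_mat[OF S'sym, of ?y w]
    by (simp add: matrix_vector_right_distrib inner_add_left inner_add_right)
  have e2: "?y \<bullet> (S' *v ?y) = (A *v x) \<bullet> (S' *v (A *v x)) + 2 * (u \<bullet> ((transpose B ** S' ** A) *v x))
      + (B *v u) \<bullet> (S' *v (B *v u))"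
  proof -
    have "(B *v u) \<bullet> (S' *v (A *v x)) = u \<bullet> ((transpose B ** S' ** A) *v x)"
      by (rule quad_mat)
    thus ?thesis using inner_sym_mat[OF S'sym, of "A *v x" "B *v u"]
      by (simp add: matrix_vector_right_distrib inner_add_left inner_add_right)
  qed
  have e3: "u \<bullet> (R *v u) + (B *v u) \<bullet> (S' *v (B *v u)) = u \<bullet> (G *v u)"
    unfolding G_def quad_mat by (simp add: matrix_vector_mult_add_rdistrib inner_add_right)
  have e4: "x \<bullet> ((Q + transpose A ** S' ** A - transpose K ** G ** K) *v x)
      = x \<bullet> (Q *v x) + (A *v x) \<bullet> (S' *v (A *v x)) - (K *v x) \<bullet> (G *v (K *v x))"
    unfolding quad_mat by (simp add: matrix_vector_mult_add_rdistrib matrix_vector_mult_diff_rdistrib inner_add_right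
        inner_diff_right)
  have e5: "(u + K *v x) \<bullet> (G *v (u + K *v x)) = u \<bullet> (G *v u) + 2 * (u \<bullet> ((G ** K) *v x))
      + (K *v x) \<bullet> (G *v (K *v x))"
    using inner_sym_mat[OF Gsym, of u "K *v x"]
    by (simp add: matrix_vector_right_distrib inner_add_left inner_add_right matrix_vector_mul_assoc[symmetric])
  show ?thesis using e1 e2 e3 e4 e5 GK by simp
qed


lemma riccS_last: "riccS A B Q R N (Suc N) = Q (Suc N)"
  by (subst riccS.simps) simp

lemma riccS_le: "k \<le> N \<Longrightarrow> riccS A B Q R N k =
   Q k + transpose A ** riccS A B Q R N (Suc k) ** A
   - transpose (riccK A B Q R N k) ** (R k + transpose B ** riccS A B Q R N (Suc k) ** B) ** riccK A B Q R N k"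
  by (subst riccS.simps) (simp add: Let_def riccK_def)

lemma ricc_props:
  fixes A :: "real^'n^'n" and B :: "real^'m^'n"
  assumes Q: "\<And>k. k \<le> N + 1 \<Longrightarrow> psd (Q k)" and R: "\<And>k. k \<le> N \<Longrightarrow> pd (R k)"
  shows "k \<le> N + 1 \<Longrightarrow> psd (riccS A B Q R N k)"
proof (induction k rule: inc_induct)
  case base
  then show ?case using Q[of "N+1"] by (simp add: riccS_last)
next
  case (step k)
  let ?S' = "riccS A B Q R N (Suc k)"
  let ?G = "R k + transpose B ** ?S' ** B"
  let ?K = "riccK A B Q R N k"
  have kN: "k \<le> N" using step by simp
  have S'sym: "transpose ?S' = ?S'" using step.IH unfolding psd_def by simp
  have Rsym: "transpose (R k) = R k" using R[OF kN] unfolding pd_def by simp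
  have Gpd: "pd ?G" unfolding pd_def
  proof (intro conjI allI impI)
    show "transpose ?G = ?G" using S'sym Rsym by (simp add: transpose_add matrix_transpose_mul matrix_mul_assoc)
    fix v :: "real^'m" assume "v \<noteq> 0"
    have "0 < v \<bullet> (R k *v v)" using R[OF kN] \<open>v \<noteq> 0\<close> unfolding pd_def by simp
    moreover have "0 \<le> (B *v v) \<bullet> (?S' *v (B *v v))" using step.IH unfolding psd_def by simp
    ultimately show "0 < v \<bullet> (?G *v v)"
      by (simp add: matrix_vector_mult_add_rdistrib inner_add_right quad_mat)
  qed
  have inv: "invertible ?G" using pd_invertible[OF Gpd] .
  have Ssym: "transpose (riccS A B Q R N k) = riccS A B Q R N k"
  proof -
    have "transpose ?G = ?G" using Gpd unfolding pd_def by simp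
    moreover have "transpose (Q k) = Q k" using Q[of k] kN unfolding psd_def by simp
    ultimately show ?thesis using S'sym unfolding riccS_le[OF kN]
      by (simp add: transpose_add transpose_diff matrix_transpose_mul matrix_mul_assoc)
  qed
  show ?case unfolding psd_def
  proof (intro conjI allI)
    show "transpose (riccS A B Q R N k) = riccS A B Q R N k" by (rule Ssym)
    fix v :: "real^'n"
    let ?u = "- (?K *v v)"
    have id: "v \<bullet> (Q k *v v) + ?u \<bullet> (R k *v ?u) + (A *v v + B *v ?u + 0) \<bullet> (?S' *v (A *v v + B *v ?u + 0))
       - v \<bullet> (riccS A B Q R N k *v v) = 0"
      using step_identity[where x=v and Q="Q k" and u="?u" and w=0 and A=A, OF S'sym Rsym inv] unfolding riccS_le[OF kN] riccK_def
      by simp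
    have "0 \<le> v \<bullet> (Q k *v v)" using Q[of k] kN unfolding psd_def by simp
    moreover have "0 \<le> ?u \<bullet> (R k *v ?u)" using R[OF kN] unfolding pd_def
      by (metis inner_zero_left less_eq_real_def)
    moreover have "0 \<le> (A *v v + B *v ?u + 0) \<bullet> (?S' *v (A *v v + B *v ?u + 0))"
      using step.IH unfolding psd_def by blast
    ultimately show "0 \<le> v \<bullet> (riccS A B Q R N k *v v)" using id by linarith
  qed
qed

lemma ricc_G:
  fixes A :: "real^'n^'n" and B :: "real^'m^'n"
  assumes Q: "\<And>k. k \<le> N + 1 \<Longrightarrow> psd (Q k)" and R: "\<And>k. k \<le> N \<Longrightarrow> pd (R k)"
    and kN: "k \<le> N"
  shows "invertible (R k + transpose B ** riccS A B Q R N (Suc k) ** B)"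
    "transpose (riccS A B Q R N (Suc k)) = riccS A B Q R N (Suc k)"
    "transpose (R k) = R k"
proof -
  let ?S' = "riccS A B Q R N (Suc k)"
  have ps: "psd ?S'" using ricc_props[where Q=Q and R=R and N=N and k="Suc k" and A=A and B=B, OF Q R] kN by simp
  then show S'sym: "transpose ?S' = ?S'" unfolding psd_def by simp
  show Rsym: "transpose (R k) = R k" using R[OF kN] unfolding pd_def by simp
  have "pd (R k + transpose B ** ?S' ** B)" unfolding pd_def
  proof (intro conjI allI impI)
    show "transpose (R k + transpose B ** ?S' ** B) = R k + transpose B ** ?S' ** B"
      using S'sym Rsym by (simp add: transpose_add matrix_transpose_mul matrix_mul_assoc)
    fix v :: "real^'m" assume "v \<noteq> 0"
    have "0 < v \<bullet> (R k *v v)" using R[OF kN] \<open>v \<noteq> 0\<close> unfolding pd_def by simp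
    moreover have "0 \<le> (B *v v) \<bullet> (?S' *v (B *v v))" using ps unfolding psd_def by simp
    ultimately show "0 < v \<bullet> ((R k + transpose B ** ?S' ** B) *v v)"
      by (simp add: matrix_vector_mult_add_rdistrib inner_add_right quad_mat)
  qed
  thus "invertible (R k + transpose B ** ?S' ** B)" by (rule pd_invertible)
qed


(* ---- from s2/P2.thy ---- *)


lemma traj_len: "length (fst (traj A B K eta x0 w k)) = Suc k \<and> length (snd (traj A B K eta x0 w k)) = k"
  by (induction k) (auto simp: Let_def split_beta)

lemma traj_Suc_fst: "fst (traj A B K eta x0 w (Suc k)) = fst (traj A B K eta x0 w k) @
   [A *v (fst (traj A B K eta x0 w k) ! k) + B *v (- (K k *v xhat A B (eta k) k (fst (traj A B K eta x0 w k)) (snd (traj A B K eta x0 w k)))) + w k]"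
  by (simp add: Let_def split_beta)

lemma traj_Suc_snd: "snd (traj A B K eta x0 w (Suc k)) = snd (traj A B K eta x0 w k) @
   [- (K k *v xhat A B (eta k) k (fst (traj A B K eta x0 w k)) (snd (traj A B K eta x0 w k)))]"
  by (simp add: Let_def split_beta)

lemma traj_fst_nth: "j \<le> k \<Longrightarrow> fst (traj A B K eta x0 w k) ! j = state A B K eta x0 w j"
proof (induction k)
  case 0 then show ?case by (simp add: state_def)
next
  case (Suc k)
  show ?case
  proof (cases "j \<le> k")
    case True
    then show ?thesis using Suc traj_len[of A B K eta x0 w k]
      by (simp add: traj_Suc_fst nth_append del: traj.simps)
  next
    case False
    then have "j = Suc k" using Suc by simp
    then show ?thesis by (simp add: state_def)
  qed
qed

lemma traj_snd_nth: "j < k \<Longrightarrow> snd (traj A B K eta x0 w k) ! j = input A B K eta x0 w j"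
proof (induction k)
  case 0 then show ?case by simp
next
  case (Suc k)
  show ?case
  proof (cases "j < k")
    case True
    then show ?thesis using Suc traj_len[of A B K eta x0 w k]
      by (simp add: traj_Suc_snd nth_append del: traj.simps)
  next
    case False
    then have "j = k" using Suc by simp
    then show ?thesis by (simp add: input_def)
  qed
qed

lemma xhat_eq: "e \<le> k \<Longrightarrow> xhat A B e k (fst (traj A B K eta x0 w k)) (snd (traj A B K eta x0 w k))
   = mpow A e *v state A B K eta x0 w (k - e) + (\<Sum>t = 1..e. mpow A (t - 1) *v (B *v input A B K eta x0 w (k - t)))"
  unfolding xhat_def by (simp add: traj_fst_nth traj_snd_nth)

definition xh where "xh A B K eta x0 w k = mpow A (eta k) *v state A B K eta x0 w (k - eta k)
   + (\<Sum>t = 1..eta k. mpow A (t - 1) *v (B *v input A B K eta x0 w (k - t)))"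

lemma input_eq: "eta k \<le> k \<Longrightarrow> input A B K eta x0 w k = - (K k *v xh A B K eta x0 w k)"
proof -
  assume "eta k \<le> k"
  have "input A B K eta x0 w k = snd (traj A B K eta x0 w (Suc k)) ! k" by (simp add: input_def)
  also have "\<dots> = - (K k *v xhat A B (eta k) k (fst (traj A B K eta x0 w k)) (snd (traj A B K eta x0 w k)))"
    using traj_len[of A B K eta x0 w k] by (simp add: traj_Suc_snd nth_append del: traj.simps)
  finally show ?thesis using xhat_eq[of "eta k" k A B K eta x0 w] \<open>eta k \<le> k\<close> by (simp add: xh_def)
qed

lemma state_Suc: "state A B K eta x0 w (Suc k) = A *v state A B K eta x0 w k + B *v input A B K eta x0 w k + w k"
proof -
  have "state A B K eta x0 w (Suc k) = fst (traj A B K eta x0 w (Suc k)) ! Suc k" by (simp add: state_def)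
  also have "\<dots> = A *v (fst (traj A B K eta x0 w k) ! k) + B *v (- (K k *v xhat A B (eta k) k (fst (traj A B K eta x0 w k)) (snd (traj A B K eta x0 w k)))) + w k"
    using traj_len[of A B K eta x0 w k] by (simp add: traj_Suc_fst nth_append del: traj.simps)
  also have "- (K k *v xhat A B (eta k) k (fst (traj A B K eta x0 w k)) (snd (traj A B K eta x0 w k))) = input A B K eta x0 w k"
    using traj_len[of A B K eta x0 w k] by (simp add: input_def traj_Suc_snd nth_append del: traj.simps)
  finally show ?thesis by (simp add: state_def)
qed

lemma state_0: "state A B K eta x0 w 0 = x0" by (simp add: state_def)

lemma mpow_comm: "mpow A e ** A = A ** mpow A e"
proof (induction e)
  case 0 then show ?case by (simp add: matrix_mul_lid matrix_mul_rid)
next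
  case (Suc e) then show ?case by (metis matrix_mul_assoc mpow.simps(2))
qed

lemma state_unroll: "e \<le> k \<Longrightarrow> state A B K eta x0 w k = mpow A e *v state A B K eta x0 w (k - e)
   + (\<Sum>t = 1..e. mpow A (t - 1) *v (B *v input A B K eta x0 w (k - t) + w (k - t)))"
proof (induction e)
  case 0 then show ?case by simp
next
  case (Suc e)
  have k: "k - e = Suc (k - Suc e)" using Suc by simp
  have "mpow A e *v state A B K eta x0 w (k - e) = mpow A (Suc e) *v state A B K eta x0 w (k - Suc e)
     + mpow A e *v (B *v input A B K eta x0 w (k - Suc e) + w (k - Suc e))"
    unfolding k state_Suc
    by (simp add: matrix_vector_right_distrib matrix_vector_mul_assoc mpow_comm)
  then show ?case using Suc by (simp add: add.assoc)
qed

definition err where "err A eta w k = (\<Sum>t = 1..eta k. mpow A (t - 1) *v w (k - t))"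

lemma err_eq: "eta k \<le> k \<Longrightarrow> state A B K eta x0 w k - xh A B K eta x0 w k = err A eta w k"
  using state_unroll[of "eta k" k A B K eta x0 w]
  by (simp add: xh_def err_def matrix_vector_right_distrib sum.distrib)


(* ---- from s3/P3.thy ---- *)


lemma path_cost_identity:
  fixes A :: "real^'n^'n" and B :: "real^'m^'n"
  assumes Q: "\<And>k. k \<le> N + 1 \<Longrightarrow> psd (Q k)" and R: "\<And>k. k \<le> N \<Longrightarrow> pd (R k)"
    and eta: "\<And>k. eta k \<le> k"
  shows "path_cost A B (riccK A B Q R N) Q R \<theta> N eta x0 w =
    x0 \<bullet> (riccS A B Q R N 0 *v x0) +
    (\<Sum>k = 0..N. - \<theta> k * real (eta k) + err A eta w k \<bullet> (riccGamma A B Q R N k *v err A eta w k)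
       + 2 * (w k \<bullet> (riccS A B Q R N (Suc k) *v (A *v state A B (riccK A B Q R N) eta x0 w k
                + B *v input A B (riccK A B Q R N) eta x0 w k)))
       + w k \<bullet> (riccS A B Q R N (Suc k) *v w k))"
proof -
  let ?K = "riccK A B Q R N"
  let ?x = "state A B ?K eta x0 w" and ?u = "input A B ?K eta x0 w"
  let ?S = "riccS A B Q R N"
  let ?f = "\<lambda>k. ?x k \<bullet> (?S k *v ?x k)"
  have step: "?x k \<bullet> (Q k *v ?x k) + ?u k \<bullet> (R k *v ?u k) + (?f (Suc k) - ?f k) =
     err A eta w k \<bullet> (riccGamma A B Q R N k *v err A eta w k)
       + 2 * (w k \<bullet> (?S (Suc k) *v (A *v ?x k + B *v ?u k))) + w k \<bullet> (?S (Suc k) *v w k)"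
    if kN: "k \<le> N" for k
  proof -
    note G1 = ricc_G(1)[where A=A and B=B and Q=Q and R=R and N=N, OF Q R kN] and G2 = ricc_G(2)[where A=A and B=B and Q=Q and R=R and N=N, OF Q R kN]
      and G3 = ricc_G(3)[where Q=Q and R=R and N=N, OF Q R kN]
    have id: "?x k \<bullet> (Q k *v ?x k) + ?u k \<bullet> (R k *v ?u k) + (A *v ?x k + B *v ?u k + w k) \<bullet> (?S (Suc k) *v (A *v ?x k + B *v ?u k + w k))
     - ?x k \<bullet> (?S k *v ?x k)
     = (?u k + ?K k *v ?x k) \<bullet> ((R k + transpose B ** ?S (Suc k) ** B) *v (?u k + ?K k *v ?x k))
       + 2 * (w k \<bullet> (?S (Suc k) *v (A *v ?x k + B *v ?u k))) + w k \<bullet> (?S (Suc k) *v w k)"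
      using step_identity[where x="?x k" and Q="Q k" and u="?u k" and w="w k" and A=A, OF G2 G3 G1]
      unfolding riccS_le[OF kN, where A=A and B=B and Q=Q and R=R] riccK_def[of A B Q R N k, symmetric] by simp
    have ue: "?u k + ?K k *v ?x k = ?K k *v err A eta w k"
      using input_eq[of eta k A B ?K x0 w] err_eq[of eta k A B ?K x0 w] eta[of k]
      by (simp add: matrix_vector_mult_diff_distrib[symmetric])
    have ga: "(?K k *v err A eta w k) \<bullet> ((R k + transpose B ** ?S (Suc k) ** B) *v (?K k *v err A eta w k))
      = err A eta w k \<bullet> (riccGamma A B Q R N k *v err A eta w k)"
      unfolding quad_mat riccGamma_def by (simp add: add.commute)
    show ?thesis using id ue ga by (simp add: state_Suc)
  qed
  have tel: "(\<Sum>k = 0..N. ?f (Suc k) - ?f k) = ?f (Suc N) - ?f 0"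
    by (rule sum_Suc_diff) simp
  have "path_cost A B ?K Q R \<theta> N eta x0 w = ?f (Suc N) + (\<Sum>k = 0..N. - \<theta> k * real (eta k) + ?x k \<bullet> (Q k *v ?x k) + ?u k \<bullet> (R k *v ?u k))"
    unfolding path_cost_def by (simp add: Let_def riccS_last)
  also have "\<dots> = ?f 0 + (\<Sum>k = 0..N. - \<theta> k * real (eta k) + (?x k \<bullet> (Q k *v ?x k) + ?u k \<bullet> (R k *v ?u k) + (?f (Suc k) - ?f k)))"
  proof -
    have "(\<Sum>k = 0..N. - \<theta> k * real (eta k) + (?x k \<bullet> (Q k *v ?x k) + ?u k \<bullet> (R k *v ?u k) + (?f (Suc k) - ?f k)))
      = (\<Sum>k = 0..N. - \<theta> k * real (eta k) + ?x k \<bullet> (Q k *v ?x k) + ?u k \<bullet> (R k *v ?u k)) + (\<Sum>k = 0..N. ?f (Suc k) - ?f k)"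
      unfolding sum.distrib[symmetric] by (rule sum.cong) simp_all
    thus ?thesis using tel by simp
  qed
  also have "\<dots> = ?f 0 + (\<Sum>k = 0..N. - \<theta> k * real (eta k) + err A eta w k \<bullet> (riccGamma A B Q R N k *v err A eta w k)
       + 2 * (w k \<bullet> (?S (Suc k) *v (A *v ?x k + B *v ?u k))) + w k \<bullet> (?S (Suc k) *v w k))"
    apply (rule arg_cong[where f="\<lambda>s. ?f 0 + s"])
    apply (rule sum.cong[OF refl])
    subgoal for k using step[of k] by simp
    done
  finally show ?thesis by (simp add: state_0)
qed


(* ---- from s4/P4.thy ---- *)


lemma eta_plus_prop:
  "eta_plus A B Q R \<theta> N w (Suc k) \<le> eta_plus A B Q R \<theta> N w k + 1 \<and>
   (\<forall>e'\<le>eta_plus A B Q R \<theta> N w k + 1.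
      queue_obj A (riccGamma A B Q R N (Suc k)) (\<theta> (Suc k)) (Suc k) w (eta_plus A B Q R \<theta> N w (Suc k))
      \<le> queue_obj A (riccGamma A B Q R N (Suc k)) (\<theta> (Suc k)) (Suc k) w e')"
proof -
  define p where "p = eta_plus A B Q R \<theta> N w k"
  define f where "f = queue_obj A (riccGamma A B Q R N (Suc k)) (\<theta> (Suc k)) (Suc k) w"
  have fin: "finite (f ` {..p+1})" "f ` {..p+1} \<noteq> {}" by auto
  obtain e where e: "e \<in> {..p+1}" "f e = Min (f ` {..p+1})" using Min_in[OF fin] by (metis imageE)
  have "e \<le> p + 1 \<and> (\<forall>e'\<le>p + 1. f e \<le> f e')" using e fin by auto
  hence "(LEAST e. e \<le> p + 1 \<and> (\<forall>e'\<le>p + 1. f e \<le> f e')) \<le> p + 1 \<and>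
     (\<forall>e'\<le>p + 1. f (LEAST e. e \<le> p + 1 \<and> (\<forall>e'\<le>p + 1. f e \<le> f e')) \<le> f e')"
    by (rule LeastI)
  thus ?thesis by (simp add: p_def f_def Let_def)
qed

lemma eta_plus_le: "eta_plus A B Q R \<theta> N w k \<le> k"
proof (induction k)
  case 0 then show ?case by simp
next
  case (Suc k) then show ?case using eta_plus_prop[of A B Q R \<theta> N w k] by linarith
qed

lemma queue_obj_0: "queue_obj A G th k w 0 = 0"
  by (simp add: queue_obj_def)

lemma eta_plus_term_le:
  "- \<theta> k * real (eta_plus A B Q R \<theta> N w k)
    + err A (eta_plus A B Q R \<theta> N w) w k \<bullet> (riccGamma A B Q R N k *v err A (eta_plus A B Q R \<theta> N w) w k) \<le> 0"
proof (cases k)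
  case 0 then show ?thesis by (simp add: err_def)
next
  case (Suc j)
  have "queue_obj A (riccGamma A B Q R N (Suc j)) (\<theta> (Suc j)) (Suc j) w (eta_plus A B Q R \<theta> N w (Suc j))
      \<le> queue_obj A (riccGamma A B Q R N (Suc j)) (\<theta> (Suc j)) (Suc j) w 0"
    using eta_plus_prop[of A B Q R \<theta> N w j] by blast
  then show ?thesis unfolding Suc queue_obj_0 by (simp add: queue_obj_def err_def Let_def)
qed

lemma zero_term: "- \<theta> k * real ((\<lambda>_. 0::nat) k) + err A (\<lambda>_. 0) w k \<bullet> (G *v err A (\<lambda>_. 0) w k) = 0"
  by (simp add: err_def)


(* ---- from s5/P5.thy ---- *)


lemma meas_mv[measurable (raw)]:
  "f \<in> borel_measurable M \<Longrightarrow> (\<lambda>x. (A::real^'n^'m) *v f x) \<in> borel_measurable M"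
  by (rule borel_measurable_continuous_on[OF matrix_vector_mult_linear_continuous_on])

lemma state_input_meas:
  fixes M' :: "'a measure" and A :: "real^'n^'n" and B :: "real^'m^'n"
  assumes X0: "X0 \<in> borel_measurable M'" and W: "\<And>i. W i \<in> borel_measurable M'"
    and E: "\<And>k. E k \<in> measurable M' (count_space UNIV)" and Ele: "\<And>k \<omega>. E k \<omega> \<le> k"
  shows "(\<lambda>\<omega>. state A B K (\<lambda>k. E k \<omega>) (X0 \<omega>) (\<lambda>i. W i \<omega>) k) \<in> borel_measurable M' \<and>
         (\<lambda>\<omega>. input A B K (\<lambda>k. E k \<omega>) (X0 \<omega>) (\<lambda>i. W i \<omega>) k) \<in> borel_measurable M'"
proof (induction k rule: less_induct)
  case (less k)
  let ?st = "\<lambda>j \<omega>. state A B K (\<lambda>k. E k \<omega>) (X0 \<omega>) (\<lambda>i. W i \<omega>) j"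
  let ?in = "\<lambda>j \<omega>. input A B K (\<lambda>k. E k \<omega>) (X0 \<omega>) (\<lambda>i. W i \<omega>) j"
  have st: "?st k \<in> borel_measurable M'"
  proof (cases k)
    case 0 then show ?thesis using X0 by (simp add: state_0)
  next
    case (Suc j)
    have "?st j \<in> borel_measurable M'" "?in j \<in> borel_measurable M'" using less Suc by auto
    then show ?thesis unfolding Suc state_Suc using W by measurable
  qed
  have stle: "?st j \<in> borel_measurable M'" if "j \<le> k" for j
    using that st less by (cases "j = k") auto
  define F where "F e \<omega> = - (K k *v (mpow A (min e k) *v ?st (k - min e k) \<omega>
      + (\<Sum>t = 1..min e k. mpow A (t - 1) *v (B *v ?in (k - t) \<omega>))))" for e \<omega>
  have F: "F e \<in> borel_measurable M'" for e
  proof -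
    have "?st (k - min e k) \<in> borel_measurable M'" by (rule stle) simp
    moreover have "(\<lambda>\<omega>. \<Sum>t = 1..min e k. mpow A (t - 1) *v (B *v ?in (k - t) \<omega>)) \<in> borel_measurable M'"
    proof (rule borel_measurable_sum)
      fix t assume "t \<in> {1..min e k}"
      hence "?in (k - t) \<in> borel_measurable M'" using less by auto
      thus "(\<lambda>\<omega>. mpow A (t - 1) *v (B *v ?in (k - t) \<omega>)) \<in> borel_measurable M'" by measurable
    qed
    ultimately show ?thesis unfolding F_def by measurable
  qed
  have "?in k = (\<lambda>\<omega>. F (E k \<omega>) \<omega>)"
  proof
    fix \<omega>
    have "E k \<omega> \<le> k" by (rule Ele)
    thus "?in k \<omega> = F (E k \<omega>) \<omega>"
      using input_eq[of "\<lambda>k. E k \<omega>" k A B K "X0 \<omega>" "\<lambda>i. W i \<omega>"]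
      by (simp add: F_def xh_def min_absorb1)
  qed
  moreover have "(\<lambda>\<omega>. F (E k \<omega>) \<omega>) \<in> borel_measurable M'"
    by (rule measurable_compose_countable'[where I=UNIV]) (auto intro: F E)
  ultimately show ?case using st by simp
qed

lemma queue_obj_meas[measurable]:
  assumes W: "\<And>i. W i \<in> borel_measurable M'"
  shows "(\<lambda>\<omega>. queue_obj A G th k (\<lambda>i. W i \<omega>) e) \<in> borel_measurable M'"
  unfolding queue_obj_def Let_def
  by (intro borel_measurable_add borel_measurable_const borel_measurable_inner meas_mv borel_measurable_sum W)

lemma eta_plus_meas:
  assumes W: "\<And>i. W i \<in> borel_measurable M'"
  shows "(\<lambda>\<omega>. eta_plus A B Q R \<theta> N (\<lambda>i. W i \<omega>) k) \<in> measurable M' (count_space UNIV)"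
proof (induction k)
  case 0 then show ?case by simp
next
  case (Suc k)
  let ?p = "\<lambda>\<omega>. eta_plus A B Q R \<theta> N (\<lambda>i. W i \<omega>) k"
  let ?f = "\<lambda>\<omega>. queue_obj A (riccGamma A B Q R N (Suc k)) (\<theta> (Suc k)) (Suc k) (\<lambda>i. W i \<omega>)"
  have [measurable]: "?p \<in> measurable M' (count_space UNIV)" by (rule Suc)
  have [measurable]: "(\<lambda>\<omega>. ?f \<omega> e) \<in> borel_measurable M'" for e using W by measurable
  have "(\<lambda>\<omega>. LEAST e. e \<le> ?p \<omega> + 1 \<and> (\<forall>e'\<le>?p \<omega> + 1. ?f \<omega> e \<le> ?f \<omega> e')) \<in> measurable M' (count_space UNIV)"
    by measurable
  then show ?case by (simp add: Let_def)
qed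


(* ---- from s6/P6.thy ---- *)


definition nu :: "real^'n^'m \<Rightarrow> real" where "nu M = onorm ((*v) M)"

lemma nu_bound: "norm (M *v x) \<le> nu M * norm x"
  unfolding nu_def by (rule onorm) simp

lemma nu_nonneg: "0 \<le> nu M"
  unfolding nu_def by (rule onorm_pos_le) simp

lemma nu_bound2: "norm x \<le> c \<Longrightarrow> norm (M *v x) \<le> nu M * c"
  by (rule order_trans[OF nu_bound mult_left_mono]) (simp_all add: nu_nonneg)

definition Zs where "Zs x0 (w :: nat \<Rightarrow> real^'n) J = norm (x0 :: real^'n) + (\<Sum>i<J. norm (w i))"

lemma Zs_nonneg: "0 \<le> Zs x0 w J"
  unfolding Zs_def by (simp add: sum_nonneg)

lemma Zs_mono: "Zs x0 w J \<le> Zs x0 w (Suc J)"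
  unfolding Zs_def by simp

lemma Zs_w: "norm (w J) \<le> Zs x0 w (Suc J)"
  unfolding Zs_def using sum_nonneg[of "{..<J}" "\<lambda>i. norm (w i)"] by simp

lemma traj_bound:
  fixes A :: "real^'n^'n" and B :: "real^'m^'n" and K :: "nat \<Rightarrow> real^'n^'m"
  shows "\<exists>C\<ge>0. \<forall>eta x0 w. (\<forall>i. eta i \<le> i) \<longrightarrow>
     (\<forall>j\<le>J. norm (state A B K eta x0 w j) \<le> C * Zs x0 w J \<and> norm (input A B K eta x0 w j) \<le> C * Zs x0 w J)"
proof (induction J)
  case 0
  define C where "C = max 1 (nu (K 0))"
  have "C \<ge> 0" unfolding C_def by simp
  moreover have "norm (state A B K eta x0 w 0) \<le> C * Zs x0 w 0 \<and> norm (input A B K eta x0 w 0) \<le> C * Zs x0 w 0"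
    if "\<forall>i. eta i \<le> i" for eta x0 w
  proof -
    have e0: "eta 0 = 0" using that by (metis le_zero_eq)
    have i0: "input A B K eta x0 w 0 = - (K 0 *v x0)"
      using input_eq[of eta 0] e0 by (simp add: xh_def state_0)
    have "norm (input A B K eta x0 w 0) \<le> nu (K 0) * norm x0" unfolding i0 norm_minus_cancel by (rule nu_bound)
    also have "\<dots> \<le> C * norm x0" unfolding C_def by (intro mult_right_mono) auto
    finally have "norm (input A B K eta x0 w 0) \<le> C * norm x0" .
    moreover have "norm x0 \<le> C * norm x0" unfolding C_def
      using mult_right_mono[of 1 "max 1 (nu (K 0))" "norm x0"] by simp
    ultimately show ?thesis unfolding Zs_def by (simp add: state_0)
  qed
  ultimately show ?case by auto
next
  case (Suc J)
  obtain C where C0: "C \<ge> 0" and C: "\<And>eta x0 w j. \<forall>i. eta i \<le> i \<Longrightarrow> j \<le> J \<Longrightarrow>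
      norm (state A B K eta x0 w j) \<le> C * Zs x0 w J \<and> norm (input A B K eta x0 w j) \<le> C * Zs x0 w J"
    using Suc by blast
  define C1 where "C1 = C + nu A * C + nu B * C + 1"
  define P where "P = (\<Sum>i\<le>Suc J. nu (mpow A i))"
  define C2 where "C2 = nu (K (Suc J)) * (P * C1 + real (Suc J) * P * nu B * C)"
  have nuA: "nu A \<ge> 0" "nu B \<ge> 0" "nu (K (Suc J)) \<ge> 0" by (simp_all add: nu_nonneg)
  have P0: "P \<ge> 0" unfolding P_def by (simp add: sum_nonneg nu_nonneg)
  have PA: "nu (mpow A i) \<le> P" if "i \<le> Suc J" for i
    unfolding P_def using that by (intro member_le_sum) (simp_all add: nu_nonneg)
  have C1C: "C \<le> C1" "0 \<le> C1" using C0 nuA unfolding C1_def by simp_all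
  have C20: "0 \<le> C2" unfolding C2_def using nuA P0 C1C C0 by simp
  show ?case
  proof (intro exI[of _ "C1 + C2"] conjI allI impI)
    show "0 \<le> C1 + C2" using C1C C20 by simp
    fix eta and x0 :: "real^'n" and w :: "nat \<Rightarrow> real^'n" and j assume eta: "\<forall>i. eta i \<le> (i::nat)" and j: "j \<le> Suc J"
    let ?Z = "Zs x0 w (Suc J)"
    have Z0: "0 \<le> ?Z" "0 \<le> Zs x0 w J" by (simp_all add: Zs_nonneg)
    have old: "norm (state A B K eta x0 w j) \<le> C * ?Z \<and> norm (input A B K eta x0 w j) \<le> C * ?Z" if "j \<le> J" for j
      using C[OF eta that] Zs_mono[of x0 w J] C0 by (meson mult_left_mono order_trans)
    have stJ: "norm (state A B K eta x0 w (Suc J)) \<le> C1 * ?Z"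
    proof -
      have "norm (state A B K eta x0 w (Suc J)) \<le> norm (A *v state A B K eta x0 w J) + norm (B *v input A B K eta x0 w J) + norm (w J)"
        unfolding state_Suc by (meson norm_triangle_ineq order_trans add_right_mono)
      also have "\<dots> \<le> nu A * (C * ?Z) + nu B * (C * ?Z) + ?Z"
        using nu_bound2[of _ _ A] nu_bound2[of _ _ B] old[of J] Zs_w[of w J x0]
        by (meson add_mono order_refl)
      also have "\<dots> \<le> C1 * ?Z" unfolding C1_def using Z0 C0 by (simp add: algebra_simps)
      finally show ?thesis .
    qed
    have stall: "norm (state A B K eta x0 w i) \<le> C1 * ?Z" if "i \<le> Suc J" for i
    proof (cases "i = Suc J")
      case True then show ?thesis using stJ by simp
    next
      case False then show ?thesis using old[of i] that C1C Z0 by (meson le_SucE mult_right_mono order_trans)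
    qed
    have inJ: "norm (input A B K eta x0 w (Suc J)) \<le> C2 * ?Z"
    proof -
      let ?e = "eta (Suc J)"
      have e: "?e \<le> Suc J" using eta by simp
      have t1: "norm (mpow A ?e *v state A B K eta x0 w (Suc J - ?e)) \<le> P * (C1 * ?Z)"
        using nu_bound2[OF stall[of "Suc J - ?e"], of "mpow A ?e"] PA[OF e] C1C Z0
        by (meson diff_le_self mult_nonneg_nonneg mult_right_mono order_trans)
      have t2: "norm (mpow A (t - 1) *v (B *v input A B K eta x0 w (Suc J - t))) \<le> P * (nu B * (C * ?Z))"
        if "t \<in> {1..?e}" for t
      proof -
        have "norm (B *v input A B K eta x0 w (Suc J - t)) \<le> nu B * (C * ?Z)"
          using nu_bound2[of _ _ B] old[of "Suc J - t"] that e by auto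
        moreover have "nu (mpow A (t - 1)) \<le> P" proof (rule PA)
          show "t - 1 \<le> Suc J" using that e by auto
        qed
        ultimately show ?thesis using nu_bound2[of _ _ "mpow A (t - 1)"] nuA C0 Z0
          by (meson mult_nonneg_nonneg mult_right_mono order_trans)
      qed
      have "norm (\<Sum>t = 1..?e. mpow A (t - 1) *v (B *v input A B K eta x0 w (Suc J - t)))
          \<le> (\<Sum>t = 1..?e. P * (nu B * (C * ?Z)))"
        by (rule order_trans[OF norm_sum sum_mono]) (rule t2)
      also have "\<dots> = real ?e * (P * (nu B * (C * ?Z)))" by simp
      also have "\<dots> \<le> real (Suc J) * (P * (nu B * (C * ?Z)))"
        using e P0 nuA C0 Z0 by (intro mult_right_mono) auto
      finally have t3: "norm (\<Sum>t = 1..?e. mpow A (t - 1) *v (B *v input A B K eta x0 w (Suc J - t)))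
          \<le> real (Suc J) * (P * (nu B * (C * ?Z)))" .
      have "norm (input A B K eta x0 w (Suc J)) \<le> nu (K (Suc J)) * norm (xh A B K eta x0 w (Suc J))"
        unfolding input_eq[of eta "Suc J", OF e] norm_minus_cancel by (rule nu_bound)
      also have "norm (xh A B K eta x0 w (Suc J)) \<le> P * (C1 * ?Z) + real (Suc J) * (P * (nu B * (C * ?Z)))"
        unfolding xh_def by (rule order_trans[OF norm_triangle_ineq add_mono[OF t1 t3]])
      finally have "norm (input A B K eta x0 w (Suc J)) \<le> nu (K (Suc J)) * (P * (C1 * ?Z) + real (Suc J) * (P * (nu B * (C * ?Z))))"
        using nuA by (simp add: mult_left_mono)
      also have "\<dots> = C2 * ?Z" unfolding C2_def by (simp add: algebra_simps)
      finally show ?thesis .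
    qed
    show "norm (state A B K eta x0 w j) \<le> (C1 + C2) * ?Z"
      using stall[OF j] C20 Z0 by (smt (verit) mult_right_mono)
    show "norm (input A B K eta x0 w j) \<le> (C1 + C2) * ?Z"
    proof (cases "j = Suc J")
      case True then show ?thesis using inJ C1C Z0 by (smt (verit) mult_right_mono)
    next
      case False then show ?thesis using old[of j] j C1C C20 C0 Z0
        by (smt (verit) le_SucE mult_right_mono)
    qed
  qed
qed


(* ---- from s7/P7.thy ---- *)


lemma meas_nth[measurable (raw)]:
  "f \<in> borel_measurable M \<Longrightarrow> (\<lambda>x. (f x :: real^'n) $ i) \<in> borel_measurable M"
  unfolding cart_eq_inner_axis by (intro borel_measurable_inner measurable_const) auto

lemma mv_axis: "((C::real^'n^'n) *v axis i s) $ j = C $ j $ i * s"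
proof -
  have "((C::real^'n^'n) *v axis i s) $ j = (\<Sum>k\<in>UNIV. C $ j $ k * (if k = i then s else 0))"
    by (simp add: matrix_vector_mult_def axis_def)
  also have "\<dots> = (\<Sum>k\<in>UNIV. if k = i then C $ j $ k * s else 0)"
    by (rule sum.cong) auto
  also have "\<dots> = C $ j $ i * s" by simp
  finally show ?thesis .
qed

lemma axis_quad: "axis i s \<bullet> ((C::real^'n^'n) *v axis i s) = s * s * C $ i $ i"
  unfolding inner_axis' mv_axis by simp

lemma (in prob_space) gauss_char:
  assumes "gaussian_vec M X m C"
  shows "(CLINT \<omega>|M. iexp (s * (X \<omega> $ i))) = exp (\<i> * complex_of_real (s * m $ i) - complex_of_real (s * s * C $ i $ i / 2))"
proof -
  have "expectation (\<lambda>\<omega>. exp (\<i> * complex_of_real (axis i s \<bullet> X \<omega>)))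
     = exp (\<i> * complex_of_real (axis i s \<bullet> m) - complex_of_real ((axis i s \<bullet> (C *v axis i s)) / 2))"
    using assms unfolding gaussian_vec_def by blast
  thus ?thesis unfolding axis_quad by (simp add: inner_axis')
qed

lemma (in prob_space) gauss_meas:
  assumes "gaussian_vec M X m C"
  shows "(\<lambda>\<omega>. X \<omega> $ i) \<in> borel_measurable M"
  using assms unfolding gaussian_vec_def by (intro meas_nth) auto

lemma (in prob_space) gauss_var_nonneg:
  assumes "gaussian_vec M X m C"
  shows "C $ i $ i \<ge> 0"
proof (rule ccontr)
  assume neg: "\<not> C $ i $ i \<ge> 0"
  have meas: "(\<lambda>\<omega>. iexp (1 * (X \<omega> $ i))) \<in> borel_measurable M"
    using gauss_meas[OF assms, of i] by measurable
  have "norm (CLINT \<omega>|M. iexp (1 * (X \<omega> $ i))) \<le> 1"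
  proof -
    have "norm (CLINT \<omega>|M. iexp (1 * (X \<omega> $ i))) \<le> (LINT \<omega>|M. norm (iexp (1 * (X \<omega> $ i))))"
      by (rule integral_norm_bound)
    also have "\<dots> = 1" by (simp add: prob_space norm_exp_eq_Re)
    finally show ?thesis .
  qed
  moreover have "norm (CLINT \<omega>|M. iexp (1 * (X \<omega> $ i))) = exp (- (C $ i $ i) / 2)"
    unfolding gauss_char[OF assms] by (simp add: norm_exp_eq_Re)
  moreover have "exp (- (C $ i $ i) / 2) > 1" using neg by simp
  ultimately show False by simp
qed

lemma (in prob_space) gauss_moments:
  assumes g: "gaussian_vec M X m C"
  shows "integrable M (\<lambda>\<omega>. (X \<omega> $ i)^2) \<and> integrable M (\<lambda>\<omega>. X \<omega> $ i) \<and> expectation (\<lambda>\<omega>. X \<omega> $ i) = m $ i"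
proof -
  let ?Y = "\<lambda>\<omega>. X \<omega> $ i"
  let ?\<mu> = "m $ i" and ?c = "C $ i $ i"
  have Ym[measurable]: "?Y \<in> borel_measurable M" by (rule gauss_meas[OF g])
  have c0: "?c \<ge> 0" by (rule gauss_var_nonneg[OF g])
  show ?thesis
  proof (cases "?c = 0")
    case True
    let ?Z = "\<lambda>\<omega>. ?Y \<omega> - ?\<mu>"
    have ch: "char (distr M borel ?Z) = char (return borel 0)"
    proof
      fix s
      have "char (distr M borel ?Z) s = (CLINT \<omega>|M. iexp (s * ?Z \<omega>))"
        unfolding char_def by (subst integral_distr) auto
      also have "\<dots> = (CLINT \<omega>|M. iexp (- s * ?\<mu>) * iexp (s * ?Y \<omega>))"
        by (intro Bochner_Integration.integral_cong refl)
           (simp add: algebra_simps mult_exp_exp)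
      also have "\<dots> = iexp (- s * ?\<mu>) * (CLINT \<omega>|M. iexp (s * ?Y \<omega>))"
        by simp
      also have "\<dots> = 1" unfolding gauss_char[OF g] True
        by (simp add: mult_exp_exp algebra_simps)
      also have "\<dots> = char (return borel 0) s"
        unfolding char_def by (subst integral_return) auto
      finally show "char (distr M borel ?Z) s = char (return borel 0) s" .
    qed
    have "distr M borel ?Z = return borel 0"
      by (rule Levy_uniqueness[OF _ _ ch]) (auto simp: real_distribution_def real_distribution_axioms_def prob_space_return intro!: prob_space_distr)
    moreover have "AE x in return borel (0::real). x = 0" by (subst AE_return) auto
    ultimately have ae: "AE x in distr M borel ?Z. x = 0" by metis
    hence "AE \<omega> in M. ?Z \<omega> = 0" by (subst (asm) AE_distr_iff) auto
    hence ae2: "AE \<omega> in M. ?Y \<omega> = ?\<mu>" by auto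
    have i1: "integrable M (\<lambda>\<omega>. (?Y \<omega>)^2)"
      by (rule integrable_cong_AE_imp[of _ "\<lambda>_. ?\<mu>^2"]) (use ae2 in auto)
    have i2: "integrable M ?Y"
      by (rule integrable_cong_AE_imp[of _ "\<lambda>_. ?\<mu>"]) (use ae2 in auto)
    have "expectation ?Y = expectation (\<lambda>_. ?\<mu>)"
      by (rule integral_cong_AE) (use ae2 in auto)
    thus ?thesis using i1 i2 by (simp add: prob_space)
  next
    case False
    hence cpos: "?c > 0" using c0 by simp
    define \<sigma> where "\<sigma> = sqrt ?c"
    have \<sigma>: "\<sigma> > 0" "\<sigma> * \<sigma> = ?c" unfolding \<sigma>_def using cpos by (simp_all add: real_sqrt_mult_self)
    define Z where "Z \<omega> = (?Y \<omega> - ?\<mu>) / \<sigma>" for \<omega>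
    have Zm[measurable]: "Z \<in> borel_measurable M" unfolding Z_def by measurable
    have ch: "char (distr M borel Z) = char std_normal_distribution"
    proof
      fix s
      have "char (distr M borel Z) s = (CLINT \<omega>|M. iexp (s * Z \<omega>))"
        unfolding char_def by (subst integral_distr) auto
      also have "\<dots> = (CLINT \<omega>|M. iexp (- (s / \<sigma>) * ?\<mu>) * iexp ((s / \<sigma>) * ?Y \<omega>))"
        by (intro Bochner_Integration.integral_cong refl)
           (simp add: Z_def algebra_simps mult_exp_exp diff_divide_distrib)
      also have "\<dots> = iexp (- (s / \<sigma>) * ?\<mu>) * (CLINT \<omega>|M. iexp ((s / \<sigma>) * ?Y \<omega>))"
        by simp
      also have "\<dots> = exp (- complex_of_real (s * s / 2))"
      proof -
        have "(s / \<sigma>) * (s / \<sigma>) * ?c = s * s" using \<sigma> cpos by (simp add: field_simps)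
        thus ?thesis unfolding gauss_char[OF g]
          by (simp add: mult_exp_exp algebra_simps)
      qed
      also have "\<dots> = char std_normal_distribution s"
        unfolding char_std_normal_distribution by (simp add: power2_eq_square flip: exp_of_real)
      finally show "char (distr M borel Z) s = char std_normal_distribution s" .
    qed
    have dZ: "distr M borel Z = std_normal_distribution"
      by (rule Levy_uniqueness[OF _ real_dist_normal_dist ch]) simp
    have iZ2: "integrable M (\<lambda>\<omega>. (Z \<omega>)^2)"
      using integrable_std_normal_distribution_moment[of 2] unfolding dZ[symmetric]
      by (subst (asm) integrable_distr_eq) auto
    have iZ: "integrable M Z"
      using integrable_std_normal_distribution_moment[of 1] unfolding dZ[symmetric]
      by (subst (asm) integrable_distr_eq) auto
    have eZ: "expectation Z = 0"
    proof -
      have "(LINT x|distr M borel Z. x ^ 1) = 0"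
        unfolding dZ by (rule integral_std_normal_distribution_moment_odd) simp
      thus ?thesis by (subst (asm) integral_distr) auto
    qed
    have Yeq: "?Y = (\<lambda>\<omega>. ?\<mu> + \<sigma> * Z \<omega>)" using \<sigma> by (auto simp: Z_def)
    have eq2: "(\<lambda>\<omega>. (?Y \<omega>)^2) = (\<lambda>\<omega>. ?\<mu>^2 + (2*?\<mu>*\<sigma>) * Z \<omega> + \<sigma>^2 * (Z \<omega>)^2)"
    proof
      fix \<omega> show "(?Y \<omega>)^2 = ?\<mu>^2 + (2*?\<mu>*\<sigma>) * Z \<omega> + \<sigma>^2 * (Z \<omega>)^2"
        using fun_cong[OF Yeq, of \<omega>] by (simp add: power2_eq_square algebra_simps)
    qed
    have i1: "integrable M (\<lambda>\<omega>. (?Y \<omega>)^2)"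
      unfolding eq2
      by (intro Bochner_Integration.integrable_add integrable_mult_right iZ iZ2 integrable_const)
    have i2: "integrable M ?Y" by (subst Yeq)  (intro Bochner_Integration.integrable_add integrable_mult_right iZ integrable_const)
    have "expectation ?Y = ?\<mu>" apply (subst Yeq) using iZ eZ by (simp add: prob_space)
    thus ?thesis using i1 i2 by simp
  qed
qed


(* ---- from s8/P8.thy ---- *)


lemma si_cong:
  assumes "\<forall>i<k. w i = w' i" "\<forall>j\<le>k. eta j = eta' j" "\<forall>j. eta j \<le> j" "\<forall>j. eta' j \<le> j"
  shows "state A B K eta x0 w k = state A B K eta' x0 w' k \<and> input A B K eta x0 w k = input A B K eta' x0 w' k"
  using assms
proof (induction k rule: less_induct)
  case (less k)
  have IH: "state A B K eta x0 w j = state A B K eta' x0 w' j \<and> input A B K eta x0 w j = input A B K eta' x0 w' j"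
    if "j < k" for j using less.IH[OF that] less.prems that by auto
  have st: "state A B K eta x0 w k = state A B K eta' x0 w' k"
  proof (cases k)
    case 0 then show ?thesis by (simp add: state_0)
  next
    case (Suc j)
    then show ?thesis using IH[of j] less.prems by (simp add: state_Suc)
  qed
  have "xh A B K eta x0 w k = xh A B K eta' x0 w' k"
  proof -
    have e: "eta k = eta' k" using less.prems by simp
    have s: "state A B K eta x0 w (k - eta k) = state A B K eta' x0 w' (k - eta k)"
    proof (cases "eta k = 0")
      case True then show ?thesis using st by simp
    next
      case False
      moreover have "eta k \<le> k" using less.prems(3) by simp
      ultimately have "k - eta k < k" by simp
      then show ?thesis using IH by blast
    qed
    have "(\<Sum>t = 1..eta k. mpow A (t - 1) *v (B *v input A B K eta x0 w (k - t)))
        = (\<Sum>t = 1..eta k. mpow A (t - 1) *v (B *v input A B K eta' x0 w' (k - t)))"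
    proof (rule sum.cong[OF refl])
      fix t assume "t \<in> {1..eta k}"
      hence "k - t < k" using less.prems(3) by (metis atLeastAtMost_iff diff_less le_trans less_le_trans not_less zero_less_one le_neq_implies_less le_zero_eq not_one_le_zero)
      thus "mpow A (t - 1) *v (B *v input A B K eta x0 w (k - t)) = mpow A (t - 1) *v (B *v input A B K eta' x0 w' (k - t))"
        using IH by simp
    qed
    thus ?thesis unfolding xh_def using e s by simp
  qed
  hence "input A B K eta x0 w k = input A B K eta' x0 w' k"
    using input_eq[of eta k A B K x0 w] input_eq[of eta' k A B K x0 w'] less.prems by simp
  thus ?case using st by simp
qed

lemma eta_plus_cong:
  "\<forall>i<k. w i = w' i \<Longrightarrow> eta_plus A B Q R \<theta> N w k = eta_plus A B Q R \<theta> N w' k"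
proof (induction k)
  case 0 then show ?case by simp
next
  case (Suc k)
  have p: "eta_plus A B Q R \<theta> N w k = eta_plus A B Q R \<theta> N w' k" using Suc by simp
  have q: "queue_obj A G th (Suc k) w e = queue_obj A G th (Suc k) w' e" for G th e
    unfolding queue_obj_def using Suc.prems by (simp add: Let_def)
  show ?case by (simp add: Let_def p q)
qed


(* ---- from s9/P9.thy ---- *)


lemma norm_sq_sum: "(norm (x::real^'n))^2 = (\<Sum>j\<in>UNIV. (x $ j)^2)"
proof -
  have "(norm x)^2 = x \<bullet> x" by (rule power2_norm_eq_inner)
  also have "\<dots> = (\<Sum>j\<in>UNIV. x $ j \<bullet> x $ j)" by (rule inner_vec_def)
  finally show ?thesis by (simp add: power2_eq_square)
qed

lemma bil: "\<bar>x \<bullet> (P *v y)\<bar> \<le> nu P * (norm x * norm y)"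
proof -
  have "\<bar>x \<bullet> (P *v y)\<bar> \<le> norm x * norm (P *v y)" by (rule Cauchy_Schwarz_ineq2)
  also have "\<dots> \<le> norm x * (nu P * norm y)" by (intro mult_left_mono nu_bound) simp
  finally show ?thesis by (simp add: algebra_simps)
qed

lemma Zs_w_le: "i < J \<Longrightarrow> norm (w i) \<le> Zs x0 w J"
proof -
  assume "i < J"
  hence "norm (w i) \<le> (\<Sum>i<J. norm (w i))" by (intro member_le_sum) auto
  moreover have "0 \<le> norm x0" by simp
  ultimately show ?thesis unfolding Zs_def by linarith
qed

locale LQ = prob_space M for M :: "'a measure" +
  fixes A :: "real^'n^'n" and B :: "real^'m^'n" and Q :: "nat \<Rightarrow> real^'n^'n" and R :: "nat \<Rightarrow> real^'m^'m"
    and \<theta> :: "nat \<Rightarrow> real" and N :: nat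
    and x0 :: "'a \<Rightarrow> real^'n" and w :: "nat \<Rightarrow> 'a \<Rightarrow> real^'n"
    and ef :: "(nat \<Rightarrow> real^'n) \<Rightarrow> nat \<Rightarrow> nat"
  assumes x0m[measurable]: "x0 \<in> borel_measurable M"
    and wm[measurable]: "\<And>i. w i \<in> borel_measurable M"
    and x0sq: "\<And>j. integrable M (\<lambda>\<omega>. (x0 \<omega> $ j)^2)"
    and wsq: "\<And>i j. integrable M (\<lambda>\<omega>. (w i \<omega> $ j)^2)"
    and wint: "\<And>i j. integrable M (\<lambda>\<omega>. w i \<omega> $ j)"
    and wmean: "\<And>i j. i \<le> N \<Longrightarrow> expectation (\<lambda>\<omega>. w i \<omega> $ j) = 0"
    and indep: "indep_vars (\<lambda>_. borel) (\<lambda>i. case i of None \<Rightarrow> x0 | Some k \<Rightarrow> w k) (insert None (Some ` {..N}))"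
    and Qpsd: "\<And>k. k \<le> N + 1 \<Longrightarrow> psd (Q k)" and Rpd: "\<And>k. k \<le> N \<Longrightarrow> pd (R k)"
    and ef_le: "\<And>v k. ef v k \<le> k"
    and ef_cong: "\<And>v v' k. \<forall>i<k. v i = v' i \<Longrightarrow> ef v k = ef v' k"
    and ef_meas[measurable]: "\<And>k. (\<lambda>\<omega>. ef (\<lambda>i. w i \<omega>) k) \<in> measurable M (count_space UNIV)"
    and ef_meas2: "\<And>(M'::(nat option \<Rightarrow> real^'n) measure) W k. (\<And>i. W i \<in> borel_measurable M') \<Longrightarrow>
          (\<lambda>\<omega>. ef (\<lambda>i. W i \<omega>) k) \<in> measurable M' (count_space UNIV)"
begin

definition "X j \<omega> = state A B (riccK A B Q R N) (ef (\<lambda>i. w i \<omega>)) (x0 \<omega>) (\<lambda>i. w i \<omega>) j"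
definition "U j \<omega> = input A B (riccK A B Q R N) (ef (\<lambda>i. w i \<omega>)) (x0 \<omega>) (\<lambda>i. w i \<omega>) j"
definition "cost \<omega> = path_cost A B (riccK A B Q R N) Q R \<theta> N (ef (\<lambda>i. w i \<omega>)) (x0 \<omega>) (\<lambda>i. w i \<omega>)"
definition "vv k \<omega> = riccS A B Q R N (Suc k) *v (A *v X k \<omega> + B *v U k \<omega>)"
definition "cc k \<omega> = w k \<omega> \<bullet> vv k \<omega>"
definition "Z \<omega> = Zs (x0 \<omega>) (\<lambda>i. w i \<omega>) (Suc N)"

lemma XU_meas[measurable]: "X j \<in> borel_measurable M" "U j \<in> borel_measurable M"
  using state_input_meas[OF x0m wm ef_meas ef_le, where A=A and B=B and K="riccK A B Q R N" and k=j]
  unfolding X_def U_def by auto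

lemma cost_alt: "cost \<omega> = X (N+1) \<omega> \<bullet> (Q (N+1) *v X (N+1) \<omega>)
   + (\<Sum>k = 0..N. - \<theta> k * real (ef (\<lambda>i. w i \<omega>) k) + X k \<omega> \<bullet> (Q k *v X k \<omega>) + U k \<omega> \<bullet> (R k *v U k \<omega>))"
  unfolding cost_def path_cost_def X_def U_def Let_def by simp

lemma cost_meas[measurable]: "cost \<in> borel_measurable M"
  unfolding cost_alt[abs_def] by measurable

lemma vv_meas[measurable]: "vv k \<in> borel_measurable M"
  unfolding vv_def[abs_def] by (intro meas_mv borel_measurable_add XU_meas)

lemma cc_meas[measurable]: "cc k \<in> borel_measurable M"
  unfolding cc_def[abs_def] by (intro borel_measurable_inner vv_meas wm)

lemma Z_meas[measurable]: "Z \<in> borel_measurable M"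
proof -
  have n1: "(\<lambda>\<omega>. norm (x0 \<omega>)) \<in> borel_measurable M" "(\<lambda>\<omega>. norm (w i \<omega>)) \<in> borel_measurable M" for i
    by measurable
  show ?thesis unfolding Z_def[abs_def] Zs_def
    by (intro borel_measurable_add borel_measurable_sum n1)
qed

lemma int_normsq: "integrable M (\<lambda>\<omega>. (norm (x0 \<omega>))^2)" "integrable M (\<lambda>\<omega>. (norm (w i \<omega>))^2)"
   unfolding norm_sq_sum
   by (rule Bochner_Integration.integrable_sum, rule x0sq) (rule Bochner_Integration.integrable_sum, rule wsq)

lemma Z_sq_int: "integrable M (\<lambda>\<omega>. (Z \<omega>)^2)"
proof (rule Bochner_Integration.integrable_bound[where f="\<lambda>\<omega>. 2 * (norm (x0 \<omega>))^2 + 2 * real (Suc N) * (\<Sum>i<Suc N. (norm (w i \<omega>))^2)"])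
  show "integrable M (\<lambda>\<omega>. 2 * (norm (x0 \<omega>))^2 + 2 * real (Suc N) * (\<Sum>i<Suc N. (norm (w i \<omega>))^2))"
    by (auto intro!: Bochner_Integration.integrable_add integrable_mult_right Bochner_Integration.integrable_sum int_normsq)
  show "(\<lambda>\<omega>. (Z \<omega>)^2) \<in> borel_measurable M" by measurable
  show "AE \<omega> in M. norm ((Z \<omega>)^2) \<le> norm (2 * (norm (x0 \<omega>))^2 + 2 * real (Suc N) * (\<Sum>i<Suc N. (norm (w i \<omega>))^2))"
  proof (intro AE_I2)
    fix \<omega>
    let ?a = "norm (x0 \<omega>)" and ?s = "\<Sum>i<Suc N. norm (w i \<omega>)"
    have "(Z \<omega>)^2 = (?a + ?s)^2" unfolding Z_def Zs_def by simp
    also have "\<dots> \<le> 2 * ?a^2 + 2 * ?s^2"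
    proof -
      have "(?a + ?s)^2 + (?a - ?s)^2 = 2 * ?a^2 + 2 * ?s^2" by (simp add: power2_eq_square algebra_simps)
      moreover have "0 \<le> (?a - ?s)^2" by simp
      ultimately show ?thesis by linarith
    qed
    finally have z1: "(Z \<omega>)^2 \<le> 2 * ?a^2 + 2 * ?s^2" .
    have z2: "?s^2 \<le> (\<Sum>i<Suc N. (norm (w i \<omega>))^2) * real (Suc N)"
      using sum_squared_le_sum_of_squares[of "\<lambda>i. norm (w i \<omega>)" "{..<Suc N}"] by simp
    have z3: "(Z \<omega>)^2 \<le> 2 * ?a^2 + 2 * real (Suc N) * (\<Sum>i<Suc N. (norm (w i \<omega>))^2)"
      using z1 z2 by (simp add: algebra_simps)
    have n1: "norm ((Z \<omega>)^2) = (Z \<omega>)^2" by simp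
    have "0 \<le> 2 * ?a^2 + 2 * real (Suc N) * (\<Sum>i<Suc N. (norm (w i \<omega>))^2)" by (simp add: sum_nonneg)
    hence n2: "norm (2 * ?a^2 + 2 * real (Suc N) * (\<Sum>i<Suc N. (norm (w i \<omega>))^2)) = 2 * ?a^2 + 2 * real (Suc N) * (\<Sum>i<Suc N. (norm (w i \<omega>))^2)"
      by (simp only: real_norm_def abs_of_nonneg)
    show "norm ((Z \<omega>)^2) \<le> norm (2 * (norm (x0 \<omega>))^2 + 2 * real (Suc N) * (\<Sum>i<Suc N. (norm (w i \<omega>))^2))"
      unfolding n1 n2 by (rule z3)
  qed
qed

end


(* ---- from s10/P10.thy ---- *)


lemma bil2: "norm x \<le> a \<Longrightarrow> norm y \<le> b \<Longrightarrow> \<bar>x \<bullet> (P *v y)\<bar> \<le> nu P * (a * b)"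
  by (rule order_trans[OF bil]) (intro mult_left_mono mult_mono nu_nonneg; auto intro: order_trans[OF norm_ge_zero])

context LQ begin

lemma XU_bound: "\<exists>C\<ge>0. \<forall>\<omega> j. j \<le> Suc N \<longrightarrow> norm (X j \<omega>) \<le> C * Z \<omega> \<and> norm (U j \<omega>) \<le> C * Z \<omega>"
proof -
  obtain C where C: "C \<ge> 0" "\<forall>eta x0 w. (\<forall>i. eta i \<le> i) \<longrightarrow>
     (\<forall>j\<le>Suc N. norm (state A B (riccK A B Q R N) eta x0 w j) \<le> C * Zs x0 w (Suc N) \<and>
                  norm (input A B (riccK A B Q R N) eta x0 w j) \<le> C * Zs x0 w (Suc N))"
    using traj_bound[where A=A and B=B and K="riccK A B Q R N" and J="Suc N"] by blast
  show ?thesis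
    by (rule exI[of _ C]) (use C ef_le in \<open>auto simp: X_def U_def Z_def\<close>)
qed

lemma Z_nonneg: "0 \<le> Z \<omega>" unfolding Z_def by (rule Zs_nonneg)

lemma cost_int: "integrable M cost"
proof -
  obtain C where C0: "C \<ge> 0" and C: "\<And>\<omega> j. j \<le> Suc N \<Longrightarrow> norm (X j \<omega>) \<le> C * Z \<omega> \<and> norm (U j \<omega>) \<le> C * Z \<omega>"
    using XU_bound by blast
  define \<gamma> where "\<gamma> = nu (Q (N+1)) + (\<Sum>k = 0..N. nu (Q k) + nu (R k))"
  define \<beta> where "\<beta> = (\<Sum>k = 0..N. \<bar>\<theta> k\<bar> * real k)"
  have bnd: "\<bar>cost \<omega>\<bar> \<le> \<beta> + \<gamma> * (C * Z \<omega> * (C * Z \<omega>))" for \<omega>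
  proof -
    let ?c = "C * Z \<omega>"
    have t0: "\<bar>X (N+1) \<omega> \<bullet> (Q (N+1) *v X (N+1) \<omega>)\<bar> \<le> nu (Q (N+1)) * (?c * ?c)"
      using C[of "N+1" \<omega>] by (intro bil2) auto
    have tk: "\<bar>- \<theta> k * real (ef (\<lambda>i. w i \<omega>) k) + X k \<omega> \<bullet> (Q k *v X k \<omega>) + U k \<omega> \<bullet> (R k *v U k \<omega>)\<bar>
        \<le> \<bar>\<theta> k\<bar> * real k + (nu (Q k) + nu (R k)) * (?c * ?c)" if "k \<in> {0..N}" for k
    proof -
      have "\<bar>- \<theta> k * real (ef (\<lambda>i. w i \<omega>) k)\<bar> \<le> \<bar>\<theta> k\<bar> * real k"
        using ef_le[of "\<lambda>i. w i \<omega>" k] by (simp add: abs_mult mult_left_mono)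
      moreover have "\<bar>X k \<omega> \<bullet> (Q k *v X k \<omega>)\<bar> \<le> nu (Q k) * (?c * ?c)"
        using C[of k \<omega>] that by (intro bil2) auto
      moreover have "\<bar>U k \<omega> \<bullet> (R k *v U k \<omega>)\<bar> \<le> nu (R k) * (?c * ?c)"
        using C[of k \<omega>] that by (intro bil2) auto
      ultimately show ?thesis by (simp add: algebra_simps)
    qed
    have "\<bar>cost \<omega>\<bar> \<le> \<bar>X (N+1) \<omega> \<bullet> (Q (N+1) *v X (N+1) \<omega>)\<bar>
       + (\<Sum>k = 0..N. \<bar>- \<theta> k * real (ef (\<lambda>i. w i \<omega>) k) + X k \<omega> \<bullet> (Q k *v X k \<omega>) + U k \<omega> \<bullet> (R k *v U k \<omega>)\<bar>)"
      unfolding cost_alt by (rule order_trans[OF abs_triangle_ineq add_left_mono[OF sum_abs]])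
    also have "\<dots> \<le> nu (Q (N+1)) * (?c * ?c) + (\<Sum>k = 0..N. \<bar>\<theta> k\<bar> * real k + (nu (Q k) + nu (R k)) * (?c * ?c))"
      by (intro add_mono t0 sum_mono tk)
    also have "\<dots> = \<beta> + \<gamma> * (?c * ?c)"
    proof -
      have "(\<Sum>k = 0..N. \<bar>\<theta> k\<bar> * real k + (nu (Q k) + nu (R k)) * (?c * ?c))
          = \<beta> + (\<Sum>k = 0..N. nu (Q k) + nu (R k)) * (?c * ?c)"
        unfolding \<beta>_def by (simp add: sum.distrib flip: sum_distrib_right)
      thus ?thesis unfolding \<gamma>_def by (simp add: distrib_right)
    qed
    finally show ?thesis .
  qed
  show ?thesis
  proof (rule Bochner_Integration.integrable_bound[where f="\<lambda>\<omega>. \<beta> + (\<gamma> * C * C) * (Z \<omega>)^2"])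
    show "integrable M (\<lambda>\<omega>. \<beta> + (\<gamma> * C * C) * (Z \<omega>)^2)"
      by (auto intro!: Bochner_Integration.integrable_add integrable_mult_right Z_sq_int)
    show "cost \<in> borel_measurable M" by (rule cost_meas)
    have g0: "\<gamma> \<ge> 0" unfolding \<gamma>_def by (intro add_nonneg_nonneg sum_nonneg nu_nonneg)
    have b0: "\<beta> \<ge> 0" unfolding \<beta>_def by (intro sum_nonneg) auto
    show "AE \<omega> in M. norm (cost \<omega>) \<le> norm (\<beta> + (\<gamma> * C * C) * (Z \<omega>)^2)"
    proof (intro AE_I2)
      fix \<omega>
      have "0 \<le> \<beta> + (\<gamma> * C * C) * (Z \<omega>)^2" using g0 b0 C0 by simp
      thus "norm (cost \<omega>) \<le> norm (\<beta> + (\<gamma> * C * C) * (Z \<omega>)^2)"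
        using bnd[of \<omega>] by (simp add: power2_eq_square algebra_simps)
    qed
  qed
qed


lemma vv_bound: assumes kN: "k \<le> N" shows "\<exists>\<kappa>\<ge>0. \<forall>\<omega>. norm (vv k \<omega>) \<le> \<kappa> * Z \<omega>"
proof -
  obtain C where C0: "C \<ge> 0" and C: "\<And>\<omega> j. j \<le> Suc N \<Longrightarrow> norm (X j \<omega>) \<le> C * Z \<omega> \<and> norm (U j \<omega>) \<le> C * Z \<omega>"
    using XU_bound by blast
  let ?S = "riccS A B Q R N (Suc k)"
  show ?thesis
  proof (intro exI[of _ "nu ?S * ((nu A + nu B) * C)"] conjI allI)
    show "0 \<le> nu ?S * ((nu A + nu B) * C)" using C0 by (simp add: nu_nonneg)
    fix \<omega>
    have "norm (A *v X k \<omega> + B *v U k \<omega>) \<le> nu A * (C * Z \<omega>) + nu B * (C * Z \<omega>)"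
      using C[of k \<omega>] kN by (intro order_trans[OF norm_triangle_ineq] add_mono nu_bound2) auto
    hence "norm (vv k \<omega>) \<le> nu ?S * (nu A * (C * Z \<omega>) + nu B * (C * Z \<omega>))"
      unfolding vv_def by (rule nu_bound2)
    thus "norm (vv k \<omega>) \<le> nu ?S * ((nu A + nu B) * C) * Z \<omega>" by (simp add: algebra_simps)
  qed
qed

lemma cc_int: assumes kN: "k \<le> N" shows "integrable M (cc k)"
proof -
  obtain \<kappa> where k0: "\<kappa> \<ge> 0" and kb: "\<And>\<omega>. norm (vv k \<omega>) \<le> \<kappa> * Z \<omega>" using vv_bound[OF kN] by blast
  show ?thesis
  proof (rule Bochner_Integration.integrable_bound[where f="\<lambda>\<omega>. \<kappa> * (Z \<omega>)^2"])
    show "integrable M (\<lambda>\<omega>. \<kappa> * (Z \<omega>)^2)" by (auto intro!: integrable_mult_right Z_sq_int)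
    show "cc k \<in> borel_measurable M" by (rule cc_meas)
    show "AE \<omega> in M. norm (cc k \<omega>) \<le> norm (\<kappa> * (Z \<omega>)^2)"
    proof (intro AE_I2)
      fix \<omega>
      have wk: "norm (w k \<omega>) \<le> Z \<omega>" unfolding Z_def using kN by (intro Zs_w_le) simp
      have "\<bar>cc k \<omega>\<bar> \<le> norm (w k \<omega>) * norm (vv k \<omega>)" unfolding cc_def by (rule Cauchy_Schwarz_ineq2)
      also have "\<dots> \<le> Z \<omega> * (\<kappa> * Z \<omega>)" using wk kb[of \<omega>] by (intro mult_mono) (auto simp: Z_nonneg)
      finally show "norm (cc k \<omega>) \<le> norm (\<kappa> * (Z \<omega>)^2)" using k0 by (simp add: power2_eq_square algebra_simps)
    qed
  qed
qed

lemma vv_comp_int: assumes kN: "k \<le> N" shows "integrable M (\<lambda>\<omega>. vv k \<omega> $ j)"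
proof -
  obtain \<kappa> where k0: "\<kappa> \<ge> 0" and kb: "\<And>\<omega>. norm (vv k \<omega>) \<le> \<kappa> * Z \<omega>" using vv_bound[OF kN] by blast
  show ?thesis
  proof (rule Bochner_Integration.integrable_bound[where f="\<lambda>\<omega>. \<kappa> + \<kappa> * (Z \<omega>)^2"])
    show "integrable M (\<lambda>\<omega>. \<kappa> + \<kappa> * (Z \<omega>)^2)" by (auto intro!: Bochner_Integration.integrable_add integrable_mult_right Z_sq_int)
    show "(\<lambda>\<omega>. vv k \<omega> $ j) \<in> borel_measurable M" by (intro meas_nth vv_meas)
    show "AE \<omega> in M. norm (vv k \<omega> $ j) \<le> norm (\<kappa> + \<kappa> * (Z \<omega>)^2)"
    proof (intro AE_I2)
      fix \<omega>
      have "Z \<omega> \<le> 1 + (Z \<omega>)^2"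
      proof -
        have "0 \<le> (Z \<omega> - 1)^2" by simp
        thus ?thesis by (simp add: power2_eq_square algebra_simps) (smt (verit) mult_nonneg_nonneg Z_nonneg)
      qed
      hence "\<kappa> * Z \<omega> \<le> \<kappa> + \<kappa> * (Z \<omega>)^2" using k0 by (metis distrib_left mult.right_neutral mult_left_mono)
      moreover have "norm (vv k \<omega> $ j) \<le> norm (vv k \<omega>)" using component_le_norm_cart[of "vv k \<omega>" j] by simp
      moreover have "0 \<le> \<kappa> + \<kappa> * (Z \<omega>)^2" using k0 by simp
      ultimately show "norm (vv k \<omega> $ j) \<le> norm (\<kappa> + \<kappa> * (Z \<omega>)^2)" using kb[of \<omega>] by simp
    qed
  qed
qed

end

(* ---- from s11/P11.thy ---- *)


context LQ begin

lemma indep_wv: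
  assumes kN: "k \<le> N"
  shows "indep_var borel (\<lambda>\<omega>. w k \<omega> $ j) borel (\<lambda>\<omega>. vv k \<omega> $ j)"
proof -
  define Xi where "Xi = (\<lambda>i. case i of None \<Rightarrow> x0 | Some k \<Rightarrow> w k)"
  define A1 where "A1 = {Some k}"
  define B1 where "B1 = insert None (Some ` {..<k})"
  have ind: "indep_var (PiM A1 (\<lambda>_. borel)) (\<lambda>\<omega>. restrict (\<lambda>i. Xi i \<omega>) A1)
                       (PiM B1 (\<lambda>_. borel)) (\<lambda>\<omega>. restrict (\<lambda>i. Xi i \<omega>) B1)"
    by (rule indep_var_restrict[OF indep[folded Xi_def]]) (use kN in \<open>auto simp: A1_def B1_def\<close>)
  define Y1 where "Y1 f = (f (Some k) :: real^'n) $ j" for f :: "nat option \<Rightarrow> real^'n"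
  define Wf where "Wf i f = (if i < k then f (Some i) else (0::real^'n))" for i and f :: "nat option \<Rightarrow> real^'n"
  define G where "G f = riccS A B Q R N (Suc k) *v
      (A *v state A B (riccK A B Q R N) (ef (\<lambda>i. Wf i f)) (f None) (\<lambda>i. Wf i f) k
     + B *v input A B (riccK A B Q R N) (ef (\<lambda>i. Wf i f)) (f None) (\<lambda>i. Wf i f) k)" for f
  define Y2 where "Y2 f = G f $ j" for f
  have Y1m: "Y1 \<in> measurable (PiM A1 (\<lambda>_. borel)) borel"
    unfolding Y1_def[abs_def] by (intro meas_nth measurable_component_singleton) (simp add: A1_def)
  have Wm: "Wf i \<in> borel_measurable (PiM B1 (\<lambda>_. borel))" for i
  proof (cases "i < k")
    case True
    hence "Wf i = (\<lambda>f. f (Some i))" unfolding Wf_def[abs_def] by simp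
    moreover have "(\<lambda>f. f (Some i)) \<in> borel_measurable (PiM B1 (\<lambda>_. (borel :: (real^'n) measure)))"
      by (rule measurable_component_singleton) (use True in \<open>simp add: B1_def\<close>)
    ultimately show ?thesis by simp
  next
    case False
    hence "Wf i = (\<lambda>f. 0)" unfolding Wf_def[abs_def] by simp
    thus ?thesis by simp
  qed
  have X0m: "(\<lambda>f. f None) \<in> borel_measurable (PiM B1 (\<lambda>_. (borel :: (real^'n) measure)))"
    by (rule measurable_component_singleton) (simp add: B1_def)
  note SI = state_input_meas[OF X0m Wm ef_meas2[OF Wm] ef_le, where A=A and B=B and K="riccK A B Q R N" and k=k]
  have Y2m: "Y2 \<in> measurable (PiM B1 (\<lambda>_. borel)) borel"
    unfolding Y2_def[abs_def] G_def using SI by (intro meas_nth meas_mv borel_measurable_add) auto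
  have "indep_var borel (Y1 \<circ> (\<lambda>\<omega>. restrict (\<lambda>i. Xi i \<omega>) A1)) borel (Y2 \<circ> (\<lambda>\<omega>. restrict (\<lambda>i. Xi i \<omega>) B1))"
    by (rule indep_var_compose[OF ind Y1m Y2m])
  moreover have "Y1 \<circ> (\<lambda>\<omega>. restrict (\<lambda>i. Xi i \<omega>) A1) = (\<lambda>\<omega>. w k \<omega> $ j)"
    by (auto simp: Y1_def A1_def Xi_def)
  moreover have "Y2 \<circ> (\<lambda>\<omega>. restrict (\<lambda>i. Xi i \<omega>) B1) = (\<lambda>\<omega>. vv k \<omega> $ j)"
  proof
    fix \<omega>
    let ?f = "restrict (\<lambda>i. Xi i \<omega>) B1"
    have fN: "?f None = x0 \<omega>" by (simp add: B1_def Xi_def)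
    have fW: "(\<lambda>i. Wf i ?f) = (\<lambda>i. if i < k then w i \<omega> else 0)"
      by (auto simp: Wf_def B1_def Xi_def)
    have eq: "state A B (riccK A B Q R N) (ef (\<lambda>i. w i \<omega>)) (x0 \<omega>) (\<lambda>i. w i \<omega>) k =
              state A B (riccK A B Q R N) (ef (\<lambda>i. if i < k then w i \<omega> else 0)) (x0 \<omega>) (\<lambda>i. if i < k then w i \<omega> else 0) k \<and>
              input A B (riccK A B Q R N) (ef (\<lambda>i. w i \<omega>)) (x0 \<omega>) (\<lambda>i. w i \<omega>) k =
              input A B (riccK A B Q R N) (ef (\<lambda>i. if i < k then w i \<omega> else 0)) (x0 \<omega>) (\<lambda>i. if i < k then w i \<omega> else 0) k"
    proof (rule si_cong)
      show "\<forall>i<k. w i \<omega> = (if i < k then w i \<omega> else 0)" by simp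
      show "\<forall>j\<le>k. ef (\<lambda>i. w i \<omega>) j = ef (\<lambda>i. if i < k then w i \<omega> else 0) j"
        by (auto intro!: ef_cong)
      show "\<forall>j. ef (\<lambda>i. w i \<omega>) j \<le> j" "\<forall>j. ef (\<lambda>i. if i < k then w i \<omega> else 0) j \<le> j"
        by (simp_all add: ef_le)
    qed
    show "(Y2 \<circ> (\<lambda>\<omega>. restrict (\<lambda>i. Xi i \<omega>) B1)) \<omega> = vv k \<omega> $ j"
      unfolding comp_def Y2_def G_def fN fW using eq by (simp add: vv_def X_def U_def)
  qed
  ultimately show ?thesis by simp
qed

lemma cc_zero: assumes kN: "k \<le> N" shows "expectation (cc k) = 0"
proof -
  have cc_eq: "cc k = (\<lambda>\<omega>. \<Sum>j\<in>UNIV. w k \<omega> $ j * vv k \<omega> $ j)"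
    by (auto simp: cc_def inner_vec_def inner_real_def)
  have each: "expectation (\<lambda>\<omega>. w k \<omega> $ j * vv k \<omega> $ j) = 0" for j
    using indep_var_lebesgue_integral[OF indep_wv[OF kN] wint vv_comp_int[OF kN]] wmean[OF kN] by simp
  have int: "integrable M (\<lambda>\<omega>. w k \<omega> $ j * vv k \<omega> $ j)" for j
    by (rule indep_var_integrable[OF indep_wv[OF kN] wint vv_comp_int[OF kN]])
  show ?thesis unfolding cc_eq by (subst Bochner_Integration.integral_sum) (auto intro: int simp: each)
qed

end

(* ---- from P12.thy ---- *)


context LQ begin

lemma cost_ident: "cost \<omega> = x0 \<omega> \<bullet> (riccS A B Q R N 0 *v x0 \<omega>) +
    (\<Sum>k = 0..N. (- \<theta> k * real (ef (\<lambda>i. w i \<omega>) k)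
        + err A (ef (\<lambda>i. w i \<omega>)) (\<lambda>i. w i \<omega>) k \<bullet> (riccGamma A B Q R N k *v err A (ef (\<lambda>i. w i \<omega>)) (\<lambda>i. w i \<omega>) k))
       + 2 * cc k \<omega> + w k \<omega> \<bullet> (riccS A B Q R N (Suc k) *v w k \<omega>))"
  unfolding cost_def cc_def vv_def X_def U_def
  by (subst path_cost_identity[where A=A and B=B and Q=Q and R=R and N=N and eta="ef (\<lambda>i. w i \<omega>)", OF Qpsd Rpd ef_le])
     (simp_all add: add.assoc)

end

lemma path_cost_cong:
  assumes "\<forall>i\<le>N. w i = w' i" "\<forall>j\<le>N+1. eta j = eta' j" "\<forall>j. eta j \<le> j" "\<forall>j. eta' j \<le> j"
  shows "path_cost A B K Q R \<theta> N eta x0 w = path_cost A B K Q R \<theta> N eta' x0 w'"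
proof -
  have si: "state A B K eta x0 w j = state A B K eta' x0 w' j \<and> input A B K eta x0 w j = input A B K eta' x0 w' j"
    if "j \<le> N + 1" for j
    by (rule si_cong) (use assms that in auto)
  show ?thesis unfolding path_cost_def Let_def
    using si[of "N+1"] si assms(2) by (intro arg_cong2[where f="(+)"] sum.cong) auto
qed


theorem proposition2:
  fixes M :: "'a measure"
    and A :: "real^'n^'n" and B :: "real^'m^'n"
    and Q :: "nat \<Rightarrow> real^'n^'n" and R :: "nat \<Rightarrow> real^'m^'m" and \<theta> :: "nat \<Rightarrow> real"
    and N :: nat
    and x0 :: "'a \<Rightarrow> real^'n" and w :: "nat \<Rightarrow> 'a \<Rightarrow> real^'n"
    and m0 :: "real^'n" and M0 :: "real^'n^'n" and W :: "nat \<Rightarrow> real^'n^'n"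
  assumes "prob_space M"
    and "controllable A B"
    and "gaussian_vec M x0 m0 M0"
    and "\<And>k. k \<le> N \<Longrightarrow> gaussian_vec M (w k) 0 (W k)"
    and "\<And>k. k \<le> N \<Longrightarrow> pd (W k)"
    and "prob_space.indep_vars M (\<lambda>_. borel)
           (\<lambda>i. case i of None \<Rightarrow> x0 | Some k \<Rightarrow> w k) (insert None (Some ` {..N}))"
    and "\<And>k. k \<le> N + 1 \<Longrightarrow> psd (Q k)"
    and "\<And>k. k \<le> N \<Longrightarrow> pd (R k)"
  shows "chi M A B Q R \<theta> N x0 w (\<lambda>k \<omega>. eta_plus A B Q R \<theta> N (\<lambda>t. w t \<omega>) k)
         \<le> chi M A B Q R \<theta> N x0 w (\<lambda>k \<omega>. 0)"
proof -
  interpret prob_space M by (rule assms(1))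
  note gx = assms(3) and gw = assms(4) and Qpsd = assms(7) and Rpd = assms(8)
  define w' where "w' i \<omega> = (if i \<le> N then w i \<omega> else 0)" for i \<omega>
  have w'm: "w' i \<in> borel_measurable M" for i
    using gw[of i] unfolding w'_def gaussian_vec_def by (cases "i \<le> N") auto
  have x0m: "x0 \<in> borel_measurable M" using gx unfolding gaussian_vec_def by simp
  have x0sq: "integrable M (\<lambda>\<omega>. (x0 \<omega> $ j)^2)" for j using gauss_moments[OF gx] by simp
  have wsq: "integrable M (\<lambda>\<omega>. (w' i \<omega> $ j)^2)" for i j
    using gauss_moments[OF gw[of i]] unfolding w'_def by (cases "i \<le> N") auto
  have wint: "integrable M (\<lambda>\<omega>. w' i \<omega> $ j)" for i j
    using gauss_moments[OF gw[of i]] unfolding w'_def by (cases "i \<le> N") auto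
  have wmean: "expectation (\<lambda>\<omega>. w' i \<omega> $ j) = 0" if "i \<le> N" for i j
    using gauss_moments[OF gw[OF that]] that unfolding w'_def by simp
  have indep': "indep_vars (\<lambda>_. borel) (\<lambda>i. case i of None \<Rightarrow> x0 | Some k \<Rightarrow> w' k) (insert None (Some ` {..N}))"
    using assms(6) by (subst indep_vars_cong[where Y="\<lambda>i. case i of None \<Rightarrow> x0 | Some k \<Rightarrow> w k"])
      (auto simp: w'_def fun_eq_iff)
  interpret L1: LQ M A B Q R \<theta> N x0 w' "eta_plus A B Q R \<theta> N"
  proof (unfold_locales)
    show "x0 \<in> borel_measurable M" by (rule x0m)
  qed (auto intro: w'm x0sq wsq wint wmean indep' Qpsd Rpd eta_plus_le eta_plus_cong eta_plus_meas)
  interpret L0: LQ M A B Q R \<theta> N x0 w' "\<lambda>_ _. 0"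
  proof (unfold_locales)
    show "x0 \<in> borel_measurable M" by (rule x0m)
  qed (auto intro: w'm x0sq wsq wint wmean indep' Qpsd Rpd)
  have c1: "chi M A B Q R \<theta> N x0 w (\<lambda>k \<omega>. eta_plus A B Q R \<theta> N (\<lambda>t. w t \<omega>) k) = expectation L1.cost"
    unfolding chi_def L1.cost_def
  proof (rule Bochner_Integration.integral_cong[OF refl])
    fix \<omega>
    show "path_cost A B (riccK A B Q R N) Q R \<theta> N (eta_plus A B Q R \<theta> N (\<lambda>t. w t \<omega>)) (x0 \<omega>) (\<lambda>k. w k \<omega>) =
          path_cost A B (riccK A B Q R N) Q R \<theta> N (eta_plus A B Q R \<theta> N (\<lambda>i. w' i \<omega>)) (x0 \<omega>) (\<lambda>i. w' i \<omega>)"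
      by (rule path_cost_cong) (auto simp: w'_def eta_plus_le intro!: eta_plus_cong)
  qed
  have c0: "chi M A B Q R \<theta> N x0 w (\<lambda>k \<omega>. 0) = expectation L0.cost"
    unfolding chi_def L0.cost_def
  proof (rule Bochner_Integration.integral_cong[OF refl])
    fix \<omega>
    show "path_cost A B (riccK A B Q R N) Q R \<theta> N (\<lambda>k. 0) (x0 \<omega>) (\<lambda>k. w k \<omega>) =
          path_cost A B (riccK A B Q R N) Q R \<theta> N (\<lambda>k. 0) (x0 \<omega>) (\<lambda>i. w' i \<omega>)"
      by (rule path_cost_cong) (auto simp: w'_def)
  qed
  define D where "D \<omega> = (\<Sum>k = 0..N. - \<theta> k * real (eta_plus A B Q R \<theta> N (\<lambda>i. w' i \<omega>) k)
        + err A (eta_plus A B Q R \<theta> N (\<lambda>i. w' i \<omega>)) (\<lambda>i. w' i \<omega>) k \<bullet> (riccGamma A B Q R N k *v err A (eta_plus A B Q R \<theta> N (\<lambda>i. w' i \<omega>)) (\<lambda>i. w' i \<omega>) k))" for \<omega>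
  have Dle: "D \<omega> \<le> 0" for \<omega>
    unfolding D_def by (intro sum_nonpos eta_plus_term_le)
  have Deq: "D \<omega> = L1.cost \<omega> - L0.cost \<omega> - 2 * (\<Sum>k = 0..N. L1.cc k \<omega>) + 2 * (\<Sum>k = 0..N. L0.cc k \<omega>)" for \<omega>
  proof -
    have z: "(\<Sum>k = 0..N. - \<theta> k * real ((\<lambda>_. 0::nat) k) + err A (\<lambda>_. 0) (\<lambda>i. w' i \<omega>) k \<bullet> (riccGamma A B Q R N k *v err A (\<lambda>_. 0) (\<lambda>i. w' i \<omega>) k)) = 0"
      by (simp add: err_def)
    let ?S = "\<Sum>k = 0..N. w' k \<omega> \<bullet> (riccS A B Q R N (Suc k) *v w' k \<omega>)"
    let ?x = "x0 \<omega> \<bullet> (riccS A B Q R N 0 *v x0 \<omega>)"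
    have e1: "L1.cost \<omega> = ?x + ((D \<omega> + (\<Sum>k = 0..N. 2 * L1.cc k \<omega>)) + ?S)"
      unfolding L1.cost_ident sum.distrib D_def by (rule refl)
    have e0: "L0.cost \<omega> = ?x + ((0 + (\<Sum>k = 0..N. 2 * L0.cc k \<omega>)) + ?S)"
    proof -
      have z2: "(\<Sum>k = 0..N. - \<theta> k * real (0::nat)) = 0" by simp
      have z3: "(\<Sum>k = 0..N. err A (\<lambda>_. 0) (\<lambda>i. w' i \<omega>) k \<bullet> (riccGamma A B Q R N k *v err A (\<lambda>_. 0) (\<lambda>i. w' i \<omega>) k)) = 0"
        by (simp add: err_def)
      show ?thesis unfolding L0.cost_ident sum.distrib z2 z3 by simp
    qed
    show ?thesis using e1 e0 by (simp add: sum_distrib_left)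
  qed
  have i1: "integrable M L1.cost" "integrable M L0.cost" by (rule L1.cost_int, rule L0.cost_int)
  have i2: "integrable M (\<lambda>\<omega>. \<Sum>k = 0..N. L1.cc k \<omega>)" "integrable M (\<lambda>\<omega>. \<Sum>k = 0..N. L0.cc k \<omega>)"
    by (auto intro!: Bochner_Integration.integrable_sum L1.cc_int L0.cc_int)
  have e2: "expectation (\<lambda>\<omega>. \<Sum>k = 0..N. L1.cc k \<omega>) = 0" "expectation (\<lambda>\<omega>. \<Sum>k = 0..N. L0.cc k \<omega>) = 0"
    by (subst Bochner_Integration.integral_sum, auto intro: L1.cc_int L0.cc_int simp: L1.cc_zero L0.cc_zero)+
  have "expectation D = expectation L1.cost - expectation L0.cost
      - 2 * expectation (\<lambda>\<omega>. \<Sum>k = 0..N. L1.cc k \<omega>) + 2 * expectation (\<lambda>\<omega>. \<Sum>k = 0..N. L0.cc k \<omega>)"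
    unfolding Deq[abs_def] using i1 i2
    by (simp add: Bochner_Integration.integral_add Bochner_Integration.integral_diff)
  hence ED: "expectation D = expectation L1.cost - expectation L0.cost" using e2 by simp
  have "0 \<le> expectation (\<lambda>\<omega>. - D \<omega>)" by (rule Bochner_Integration.integral_nonneg) (simp add: Dle)
  hence "expectation D \<le> 0" by simp
  thus ?thesis using ED c1 c0 by simp
qed


end
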